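(* Let $\beta>1$ and let $t\in[0,1)\setminus\mathcal U$. Then there exists a $\beta$-rational number $r\in\mathbb Q_{(\beta)}$ such that $t\in I_r^*=(r,r^* )$. Moreover both endpoints $r$ and $r^*$ of $I_r^*$ are bifurcation parameters (that is, $r\in\mathcal U$, and $r^*\in\mathcal U$ or $r^*=1$).
   Context: Let $\gamma=\beta-1$ if $\beta$ is an integer and $\gamma=\lfloor\beta\rfloor$ otherwise. $T_\beta(x)=\beta x-\lfloor\beta x\rfloor$ on $[0,1)$. The greedy $\beta$-expansion of $x\in[0,1)$ is $b(x,\beta)=(b_i)$ with $b_i=\lfloor\beta T_\beta^{i-1}(x)\rfloor$. The quasi-greedy $\beta$-expansion $\alpha(\beta)$ of $1$ is the lexicographically largest sequence in $\{0,\dots,\gamma\}^{\mathbb N}$, not eventually zero, with $1=\sum_i\alpha(\beta)_i\beta^{-i}$. $\sigma$ is the left shift, $\prec,\preceq$ the lexicographic order, and $\pi((x_i))=\sum_i x_i\beta^{-i}$. $\Sigma_\beta=\{\omega\in\{0,\dots,\gamma\}^{\mathbb N}\colon\sigma^k(\omega)\prec\alpha(\beta)\ \forall k\ge0\}$ (the set of greedy expansions). A number $r\in(0,1)$ is $\beta$-rational if $b(r,\beta)=r_1\cdots r_m0^\infty$ with $r_m\ne0$; $\mathbb Q_{(\beta)}$ is the set of such numbers. For such $r$ define $r^*$ as follows. If the periodic sequence $(r_1\cdots r_m)^\infty\in\Sigma_\beta$, then $r^*=\pi((r_1\cdots r_m)^\infty)$. Otherwise, if $r_1=\gamma$, set $r^*=\pi(\alpha(\beta))=1$;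 if $r_1<\gamma$, start from $x^{(0)}=(r_1\cdots r_m)^\infty$ and, as long as $x^{(i)}\notin\Sigma_\beta$, let $j=\min\{k\ge0\colon\sigma^k(x^{(i)})\succeq\alpha(\beta)\}$ (one has $j\ge1$) and set $x^{(i+1)}=x^{(i)}_1\cdots x^{(i)}_{j-1}(x^{(i)}_j+1)0^\infty$; this terminates after finitely many steps at a sequence $\tilde r'\in\Sigma_\beta$, and $r^*=\pi(\tilde r')$. Put $I_r^*=(r,r^* )$. For $0<t<1$ let $K(t)=\{x\in[0,1)\colon T_\beta^k(x)\notin(0,t)\ \forall k\ge0\}$, $K(0)=[0,1)$, $K(1)=\{0\}$. A parameter $t\in[0,1]$ is a bifurcation parameter if $t\in\{0,1\}$, or $0<t<1$ and for every $\delta>0$ there is $t'\in(t-\delta,t+\delta)$ with $K(t')\ne K(t)$; $\mathcal U$ is the set of bifurcation parameters in $[0,1)$. *)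

theory Defs
  imports "HOL-Analysis.Analysis"
begin

text \<open>Digit sequences are functions nat \<Rightarrow> nat, indexed from 0:
  position i of a sequence corresponds to the (i+1)-st digit of the paper.\<close>

definition gam :: "real \<Rightarrow> nat" where
  "gam \<beta> = (if \<beta> \<in> \<int> then nat \<lfloor>\<beta>\<rfloor> - 1 else nat \<lfloor>\<beta>\<rfloor>)"

definition Tb :: "real \<Rightarrow> real \<Rightarrow> real" where
  "Tb \<beta> x = \<beta> * x - of_int \<lfloor>\<beta> * x\<rfloor>"

definition greedy :: "real \<Rightarrow> real \<Rightarrow> nat \<Rightarrow> nat" where
  "greedy \<beta> x = (\<lambda>i. nat \<lfloor>\<beta> * (Tb \<beta> ^^ i) x\<rfloor>)"

definition piv :: "real \<Rightarrow> (nat \<Rightarrow> nat) \<Rightarrow> real" where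
  "piv \<beta> w = (\<Sum>i. real (w i) / \<beta> ^ Suc i)"

definition shiftk :: "nat \<Rightarrow> (nat \<Rightarrow> nat) \<Rightarrow> (nat \<Rightarrow> nat)" where
  "shiftk k w = (\<lambda>i. w (i + k))"

definition lex_less :: "(nat \<Rightarrow> nat) \<Rightarrow> (nat \<Rightarrow> nat) \<Rightarrow> bool" where
  "lex_less x y \<longleftrightarrow> (\<exists>n. (\<forall>i<n. x i = y i) \<and> x n < y n)"

definition digit_seqs :: "real \<Rightarrow> (nat \<Rightarrow> nat) set" where
  "digit_seqs \<beta> = {w. \<forall>i. w i \<le> gam \<beta>}"

definition quasi_greedy_cands :: "real \<Rightarrow> (nat \<Rightarrow> nat) set" where
  "quasi_greedy_cands \<beta> =
     {w \<in> digit_seqs \<beta>. (\<forall>n. \<exists>i\<ge>n. w i \<noteq> 0) \<and> piv \<beta> w = 1}"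

definition alpha :: "real \<Rightarrow> (nat \<Rightarrow> nat)" where
  "alpha \<beta> = (THE a. a \<in> quasi_greedy_cands \<beta> \<and>
                 (\<forall>b \<in> quasi_greedy_cands \<beta>. \<not> lex_less a b))"

definition Sigma_b :: "real \<Rightarrow> (nat \<Rightarrow> nat) set" where
  "Sigma_b \<beta> = {w \<in> digit_seqs \<beta>. \<forall>k. lex_less (shiftk k w) (alpha \<beta>)}"

definition beta_rat :: "real \<Rightarrow> real set" where
  "beta_rat \<beta> = {r. 0 < r \<and> r < 1 \<and>
      (\<exists>m\<ge>1. greedy \<beta> r (m - 1) \<noteq> 0 \<and> (\<forall>i\<ge>m. greedy \<beta> r i = 0))}"

definition blen :: "real \<Rightarrow> real \<Rightarrow> nat" where
  "blen \<beta> r = (LEAST m. \<forall>i\<ge>m. greedy \<beta> r i = 0)"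

definition perw :: "real \<Rightarrow> real \<Rightarrow> (nat \<Rightarrow> nat)" where
  "perw \<beta> r = (\<lambda>i. greedy \<beta> r (i mod blen \<beta> r))"

text \<open>one step of the algorithm: j = min{k. sigma^k(x) \<succeq> alpha},
  x' = x_1 ... x_{j-1} (x_j + 1) 0^\<infinity> (paper's 1-based indexing)\<close>
definition rstep :: "real \<Rightarrow> (nat \<Rightarrow> nat) \<Rightarrow> (nat \<Rightarrow> nat)" where
  "rstep \<beta> x = (let j = (LEAST k. \<not> lex_less (shiftk k x) (alpha \<beta>)) in
      (\<lambda>i. if i + 1 < j then x i else if i + 1 = j then x i + 1 else 0))"

definition rstar :: "real \<Rightarrow> real \<Rightarrow> real" where
  "rstar \<beta> r =
    (if perw \<beta> r \<in> Sigma_b \<beta> then piv \<beta> (perw \<beta> r)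
     else if greedy \<beta> r 0 = gam \<beta> then piv \<beta> (alpha \<beta>)
     else piv \<beta> ((rstep \<beta> ^^ (LEAST n. (rstep \<beta> ^^ n) (perw \<beta> r) \<in> Sigma_b \<beta>))
                    (perw \<beta> r)))"

definition Kset :: "real \<Rightarrow> real \<Rightarrow> real set" where
  "Kset \<beta> t =
    (if t = 0 then {0..<1}
     else if t = 1 then {0}
     else {x \<in> {0..<1}. \<forall>k. (Tb \<beta> ^^ k) x \<notin> {0<..<t}})"

definition bifurcation :: "real \<Rightarrow> real \<Rightarrow> bool" where
  "bifurcation \<beta> t \<longleftrightarrow> t = 0 \<or> t = 1 \<or>
     (0 < t \<and> t < 1 \<and>
      (\<forall>\<delta>>0. \<exists>t'\<in>{0..1}. \<bar>t' - t\<bar> < \<delta> \<and> Kset \<beta> t' \<noteq> Kset \<beta> t))"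

definition Ubif :: "real \<Rightarrow> real set" where
  "Ubif \<beta> = {t \<in> {0..<1}. bifurcation \<beta> t}"

end

theory Submission
  imports Defs
begin


lemma lex_irrefl: "\<not> lex_less x x"
  unfolding lex_less_def by auto

lemma lex_trans: assumes "lex_less x y" "lex_less y z" shows "lex_less x z"
proof -
  obtain n where n: "\<forall>i<n. x i = y i" "x n < y n" using assms(1) unfolding lex_less_def by auto
  obtain m where m: "\<forall>i<m. y i = z i" "y m < z m" using assms(2) unfolding lex_less_def by auto
  show ?thesis unfolding lex_less_def
  proof (cases "n < m")
    case True then show "\<exists>k. (\<forall>i<k. x i = z i) \<and> x k < z k"
      using n m by (intro exI[of _ n]) auto
  next
    case False
    show "\<exists>k. (\<forall>i<k. x i = z i) \<and> x k < z k"
    proof (intro exI[of _ m] conjI)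
      show "\<forall>i<m. x i = z i" using n m False by auto
      show "x m < z m" using n m False by (cases "n = m") auto
    qed
  qed
qed

lemma lex_asym: "lex_less x y \<Longrightarrow> \<not> lex_less y x"
  using lex_irrefl lex_trans by blast

lemma lex_trich: assumes "x \<noteq> y" shows "lex_less x y \<or> lex_less y x"
proof -
  have "\<exists>i. x i \<noteq> y i" using assms by auto
  define n where "n = (LEAST i. x i \<noteq> y i)"
  have 1: "x n \<noteq> y n" unfolding n_def by (rule LeastI_ex) fact
  have 2: "\<forall>i<n. x i = y i" unfolding n_def using not_less_Least by blast
  show ?thesis
  proof (cases "x n < y n")
    case True then show ?thesis using 2 unfolding lex_less_def by auto
  next
    case False then have "y n < x n" using 1 by auto
    then show ?thesis using 2 unfolding lex_less_def by (metis)
  qed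
qed

lemma lex_not_less: "\<not> lex_less x y \<Longrightarrow> lex_less y x \<or> x = y"
  using lex_trich by blast

lemma lex_witness: "\<forall>i<n. x i = y i \<Longrightarrow> x n < y n \<Longrightarrow> lex_less x y"
  unfolding lex_less_def by auto

lemma shiftk_shiftk: "shiftk k (shiftk j w) = shiftk (j + k) w"
  unfolding shiftk_def by (simp add: ac_simps)

lemma shiftk_0[simp]: "shiftk 0 w = w"
  unfolding shiftk_def by auto

lemma lex_zero_less: assumes "\<exists>i. a i \<noteq> 0" shows "lex_less (\<lambda>_. 0) a"
proof -
  define n where "n = (LEAST i. a i \<noteq> 0)"
  have "a n \<noteq> 0" unfolding n_def by (rule LeastI_ex) fact
  moreover have "\<forall>i<n. a i = 0" unfolding n_def using not_less_Least by blast
  ultimately show ?thesis unfolding lex_less_def by (intro exI[of _ n]) auto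
qed

lemma not_lex_less_zero: "\<not> lex_less x (\<lambda>_. 0)"
  unfolding lex_less_def by auto



lemma geom_summable: assumes "(\<beta>::real) > 1" shows "summable (\<lambda>i. 1 / \<beta> ^ Suc i)"
proof -
  have "summable (\<lambda>i. (1/\<beta>) ^ i)" using summable_geometric[of "1/\<beta>"] assms by simp
  then have "summable (\<lambda>i. (1/\<beta>) * (1/\<beta>) ^ i)" by (rule summable_mult)
  then show ?thesis by (simp add: power_divide)
qed

lemma geom_sum: assumes "(\<beta>::real) > 1" shows "(\<Sum>i. 1 / \<beta> ^ Suc i) = 1 / (\<beta> - 1)"
proof -
  have "(\<lambda>i. (1/\<beta>) ^ i) sums (1 / (1 - 1/\<beta>))" using geometric_sums[of "1/\<beta>"] assms by simp
  then have "(\<lambda>i. (1/\<beta>) * (1/\<beta>) ^ i) sums ((1/\<beta>) * (1 / (1 - 1/\<beta>)))" by (rule sums_mult)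
  moreover have "(1/\<beta>) * (1 / (1 - 1/\<beta>)) = 1 / (\<beta> - 1)" using assms by (simp add: field_simps)
  ultimately show ?thesis by (simp add: power_divide sums_iff)
qed

lemma piv_summable: assumes "(\<beta>::real) > 1" "\<forall>i. w i \<le> C"
  shows "summable (\<lambda>i. real (w i) / \<beta> ^ Suc i)"
proof (rule summable_comparison_test)
  show "\<exists>N. \<forall>n\<ge>N. norm (real (w n) / \<beta> ^ Suc n) \<le> real C * (1 / \<beta> ^ Suc n)"
    using assms by (intro exI[of _ 0]) (auto simp: divide_right_mono)
  show "summable (\<lambda>n. real C * (1 / \<beta> ^ Suc n))" using geom_summable[OF assms(1)] by (rule summable_mult)
qed

lemma piv_nonneg: assumes "(\<beta>::real) > 1" "\<forall>i. w i \<le> C" shows "piv \<beta> w \<ge> 0"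
  unfolding piv_def using assms by (intro suminf_nonneg piv_summable) auto

lemma piv_le: assumes "(\<beta>::real) > 1" "\<forall>i. w i \<le> C" shows "piv \<beta> w \<le> real C / (\<beta> - 1)"
proof -
  have "piv \<beta> w \<le> (\<Sum>i. real C * (1 / \<beta> ^ Suc i))" unfolding piv_def
    using assms by (intro suminf_le piv_summable summable_mult geom_summable) (auto simp: divide_right_mono)
  also have "\<dots> = real C * (1 / (\<beta> - 1))" using suminf_mult[OF geom_summable[OF assms(1)], of "real C"] geom_sum[OF assms(1)]
    by simp
  finally show ?thesis by simp
qed

lemma piv_pos: assumes "(\<beta>::real) > 1" "\<forall>i. w i \<le> C" "w k \<noteq> 0" shows "piv \<beta> w > 0"
  unfolding piv_def
proof (rule suminf_pos2[of _ k])
  show "summable (\<lambda>i. real (w i) / \<beta> ^ Suc i)" by (rule piv_summable[OF assms(1,2)])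
  show "\<And>n. 0 \<le> real (w n) / \<beta> ^ Suc n" using assms by auto
  show "0 < real (w k) / \<beta> ^ Suc k" using assms by auto
qed

lemma piv_zero[simp]: "piv \<beta> (\<lambda>_. 0) = 0"
  unfolding piv_def by simp

lemma piv_split: assumes "(\<beta>::real) > 1" "\<forall>i. w i \<le> C"
  shows "piv \<beta> w = (\<Sum>i<n. real (w i) / \<beta> ^ Suc i) + piv \<beta> (shiftk n w) / \<beta> ^ n"
proof -
  have s: "summable (\<lambda>i. real (w i) / \<beta> ^ Suc i)" by (rule piv_summable[OF assms])
  have s2: "summable (\<lambda>i. real (shiftk n w i) / \<beta> ^ Suc i)"
    using assms by (intro piv_summable[of _ _ C]) (auto simp: shiftk_def)
  have "piv \<beta> w = (\<Sum>i. real (w (i + n)) / \<beta> ^ Suc (i + n)) + (\<Sum>i<n. real (w i) / \<beta> ^ Suc i)"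
    unfolding piv_def using suminf_split_initial_segment[OF s, of n] by simp
  moreover have "(\<lambda>i. real (w (i + n)) / \<beta> ^ Suc (i + n)) = (\<lambda>i. (real (shiftk n w i) / \<beta> ^ Suc i) / \<beta> ^ n)"
    by (auto simp: shiftk_def power_add)
  moreover have "(\<Sum>i. (real (shiftk n w i) / \<beta> ^ Suc i) / \<beta> ^ n) = piv \<beta> (shiftk n w) / \<beta> ^ n"
    unfolding piv_def using s2 by (rule suminf_divide)
  ultimately show ?thesis by simp
qed

lemma piv_split1: assumes "(\<beta>::real) > 1" "\<forall>i. w i \<le> C"
  shows "\<beta> * piv \<beta> w = real (w 0) + piv \<beta> (shiftk 1 w)"
proof -
  have "piv \<beta> w = real (w 0) / \<beta> + piv \<beta> (shiftk 1 w) / \<beta>" using piv_split[OF assms, of 1] by simp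
  then show ?thesis using assms by (simp add: field_simps)
qed



lemma Tb_range: "0 \<le> Tb \<beta> x \<and> Tb \<beta> x < 1"
  unfolding Tb_def by linarith

lemma Tb_iter_range: "0 \<le> x \<Longrightarrow> x < 1 \<Longrightarrow> 0 \<le> (Tb \<beta> ^^ k) x \<and> (Tb \<beta> ^^ k) x < 1"
  by (cases k) (auto simp: Tb_range)

lemma Tb_iter_nonneg: "0 \<le> x \<Longrightarrow> 0 \<le> (Tb \<beta> ^^ k) x"
  by (cases k) (auto simp: Tb_range)

lemma greedy_real: assumes "(\<beta>::real) > 1" "0 \<le> x"
  shows "real (greedy \<beta> x k) = of_int \<lfloor>\<beta> * (Tb \<beta> ^^ k) x\<rfloor>"
proof -
  have "0 \<le> \<beta> * (Tb \<beta> ^^ k) x" using assms Tb_iter_nonneg[OF assms(2)] by auto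
  then show ?thesis unfolding greedy_def by simp
qed

lemma Tb_iter_Suc: assumes "(\<beta>::real) > 1" "0 \<le> x"
  shows "(Tb \<beta> ^^ Suc k) x = \<beta> * (Tb \<beta> ^^ k) x - real (greedy \<beta> x k)"
  using greedy_real[OF assms] by (simp add: Tb_def)

lemma greedy_shift: "shiftk k (greedy \<beta> x) = greedy \<beta> ((Tb \<beta> ^^ k) x)"
  unfolding shiftk_def greedy_def by (auto simp: funpow_add)

lemma Tb_zero: "Tb \<beta> 0 = 0" unfolding Tb_def by simp

lemma Tb_iter_zero: "(Tb \<beta> ^^ k) 0 = 0"
  by (induction k) (auto simp: Tb_zero)

lemma Tb_iter_zero_after: "(Tb \<beta> ^^ j) x = 0 \<Longrightarrow> j \<le> k \<Longrightarrow> (Tb \<beta> ^^ k) x = 0"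
proof -
  assume "(Tb \<beta> ^^ j) x = 0" "j \<le> k"
  then obtain d where "k = d + j" by (metis add.commute le_Suc_ex)
  then show ?thesis using \<open>(Tb \<beta> ^^ j) x = 0\<close> by (simp add: funpow_add Tb_iter_zero)
qed

lemma greedy_zero: "greedy \<beta> 0 = (\<lambda>_. 0)"
  unfolding greedy_def by (simp add: Tb_iter_zero)

lemma gam_ceil: assumes "(\<beta>::real) > 1" shows "int (gam \<beta>) = \<lceil>\<beta>\<rceil> - 1"
proof (cases "\<beta> \<in> \<int>")
  case True
  then obtain k where k: "\<beta> = of_int k" by (auto elim: Ints_cases)
  then have "k \<ge> 2" using assms by simp
  then show ?thesis using True k unfolding gam_def by simp
next
  case False
  then have "\<beta> \<noteq> of_int \<lfloor>\<beta>\<rfloor>" by (metis Ints_of_int)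
  then have "\<lceil>\<beta>\<rceil> = \<lfloor>\<beta>\<rfloor> + 1" by (simp add: ceiling_altdef)
  moreover have "\<lfloor>\<beta>\<rfloor> \<ge> 1" using assms by linarith
  ultimately show ?thesis using False unfolding gam_def by simp
qed

lemma floor_le_gam: assumes "(\<beta>::real) > 1" "0 \<le> z" "z < 1" shows "nat \<lfloor>\<beta> * z\<rfloor> \<le> gam \<beta>"
proof -
  have "\<beta> * z < \<beta>" using assms by simp
  then have "(of_int \<lfloor>\<beta> * z\<rfloor> :: real) < of_int \<lceil>\<beta>\<rceil>"
    using of_int_floor_le[of "\<beta> * z"] le_of_int_ceiling[of \<beta>] by linarith
  then have "\<lfloor>\<beta> * z\<rfloor> < \<lceil>\<beta>\<rceil>" by (simp only: of_int_less_iff)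
  then show ?thesis using gam_ceil[OF assms(1)] by linarith
qed

lemma greedy_le_gam: assumes "(\<beta>::real) > 1" "0 \<le> x" "x < 1" shows "greedy \<beta> x i \<le> gam \<beta>"
  unfolding greedy_def using floor_le_gam[OF assms(1)] Tb_iter_range[OF assms(2,3)] by blast

lemma greedy_mono: assumes "(\<beta>::real) > 1" "0 \<le> x" "x \<le> y" 
  shows "\<not> lex_less (greedy \<beta> y) (greedy \<beta> x)"
proof
  assume "lex_less (greedy \<beta> y) (greedy \<beta> x)"
  then obtain n where n: "\<forall>i<n. greedy \<beta> y i = greedy \<beta> x i" "greedy \<beta> y n < greedy \<beta> x n"
    unfolding lex_less_def by auto
  have y0: "0 \<le> y" using assms by linarith
  have "\<forall>m\<le>n. (Tb \<beta> ^^ m) y - (Tb \<beta> ^^ m) x = \<beta> ^ m * (y - x)"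
  proof (intro allI impI)
    fix m assume "m \<le> n"
    then show "(Tb \<beta> ^^ m) y - (Tb \<beta> ^^ m) x = \<beta> ^ m * (y - x)"
    proof (induction m)
      case 0 then show ?case by simp
    next
      case (Suc m)
      have "(Tb \<beta> ^^ Suc m) y - (Tb \<beta> ^^ Suc m) x = \<beta> * ((Tb \<beta> ^^ m) y - (Tb \<beta> ^^ m) x)"
        using Tb_iter_Suc[OF assms(1) y0, of m] Tb_iter_Suc[OF assms(1) assms(2), of m] n(1) Suc.prems
        by (simp add: algebra_simps)
      then show ?case using Suc by simp
    qed
  qed
  then have "(Tb \<beta> ^^ n) y - (Tb \<beta> ^^ n) x = \<beta> ^ n * (y - x)" by simp
  moreover have "\<beta> ^ n * (y - x) \<ge> 0" using assms by simp
  ultimately have "(Tb \<beta> ^^ n) x \<le> (Tb \<beta> ^^ n) y" by linarith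
  then have "\<lfloor>\<beta> * (Tb \<beta> ^^ n) x\<rfloor> \<le> \<lfloor>\<beta> * (Tb \<beta> ^^ n) y\<rfloor>" using assms
    by (intro floor_mono) simp
  then have "greedy \<beta> x n \<le> greedy \<beta> y n" unfolding greedy_def by (simp add: nat_mono)
  then show False using n(2) by simp
qed



fun qr :: "real \<Rightarrow> real \<Rightarrow> nat \<Rightarrow> real" where
  "qr \<beta> x 0 = x"
| "qr \<beta> x (Suc n) = \<beta> * qr \<beta> x n - of_int (\<lceil>\<beta> * qr \<beta> x n\<rceil> - 1)"

definition qd :: "real \<Rightarrow> real \<Rightarrow> nat \<Rightarrow> nat" where
  "qd \<beta> x n = nat (\<lceil>\<beta> * qr \<beta> x n\<rceil> - 1)"

lemma qr_range: assumes "(\<beta>::real) > 1" "0 < x" "x \<le> 1" shows "0 < qr \<beta> x n \<and> qr \<beta> x n \<le> 1"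
proof (induction n)
  case 0 then show ?case using assms by simp
next
  case (Suc n)
  show ?case using ceiling_correct[of "\<beta> * qr \<beta> x n"] by simp
qed

lemma qd_real: assumes "(\<beta>::real) > 1" "0 < x" "x \<le> 1"
  shows "real (qd \<beta> x n) = of_int (\<lceil>\<beta> * qr \<beta> x n\<rceil> - 1)"
proof -
  have "0 < \<beta> * qr \<beta> x n" using qr_range[OF assms, of n] assms by simp
  then have "\<lceil>\<beta> * qr \<beta> x n\<rceil> \<ge> 1" by (simp add: ceiling_le_zero not_le[symmetric])
  then show ?thesis unfolding qd_def by simp
qed

lemma qr_Suc: assumes "(\<beta>::real) > 1" "0 < x" "x \<le> 1"
  shows "qr \<beta> x (Suc n) = \<beta> * qr \<beta> x n - real (qd \<beta> x n)"
  using qd_real[OF assms] by simp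

lemma qd_le_gam: assumes "(\<beta>::real) > 1" "0 < x" "x \<le> 1" shows "qd \<beta> x n \<le> gam \<beta>"
proof -
  have "\<beta> * qr \<beta> x n \<le> \<beta>" using qr_range[OF assms, of n] assms by simp
  then have "\<lceil>\<beta> * qr \<beta> x n\<rceil> \<le> \<lceil>\<beta>\<rceil>" by (rule ceiling_mono)
  then show ?thesis unfolding qd_def using gam_ceil[OF assms(1)] by linarith
qed

lemma qd_one_0: assumes "(\<beta>::real) > 1" shows "qd \<beta> 1 0 = gam \<beta>"
  unfolding qd_def using gam_ceil[OF assms] by simp

lemma qr_shift: "qr \<beta> (qr \<beta> x n) m = qr \<beta> x (m + n)"
  by (induction m) auto

lemma qd_shift: "shiftk n (qd \<beta> x) = qd \<beta> (qr \<beta> x n)"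
  unfolding shiftk_def qd_def by (auto simp: qr_shift)

lemma qd_partial: assumes "(\<beta>::real) > 1" "0 < x" "x \<le> 1"
  shows "(\<Sum>i<n. real (qd \<beta> x i) / \<beta> ^ Suc i) = x - qr \<beta> x n / \<beta> ^ n"
proof (induction n)
  case 0 then show ?case by simp
next
  case (Suc n)
  have "qr \<beta> x (Suc n) / \<beta> ^ Suc n = qr \<beta> x n / \<beta> ^ n - real (qd \<beta> x n) / \<beta> ^ Suc n"
    using qr_Suc[OF assms, of n] assms by (simp add: field_simps)
  then show ?case using Suc by simp
qed

lemma qd_piv: assumes "(\<beta>::real) > 1" "0 < x" "x \<le> 1" shows "piv \<beta> (qd \<beta> x) = x"
proof -
  have "(\<lambda>n. qr \<beta> x n / \<beta> ^ n) \<longlonglongrightarrow> 0"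
  proof (rule Lim_null_comparison)
    show "\<forall>\<^sub>F n in sequentially. norm (qr \<beta> x n / \<beta> ^ n) \<le> (1 / \<beta>) ^ n"
    proof (intro always_eventually allI)
      fix n
      have "\<bar>qr \<beta> x n\<bar> \<le> 1" using qr_range[OF assms, of n] by auto
      then have "\<bar>qr \<beta> x n\<bar> / \<beta> ^ n \<le> 1 / \<beta> ^ n" using assms by (intro divide_right_mono) auto
      moreover have "\<bar>\<beta> ^ n\<bar> = \<beta> ^ n" using assms by simp
      ultimately show "norm (qr \<beta> x n / \<beta> ^ n) \<le> (1 / \<beta>) ^ n" by (simp add: power_divide)
    qed
    show "(\<lambda>n. (1 / \<beta>) ^ n) \<longlonglongrightarrow> 0" using assms by (intro LIMSEQ_power_zero) auto
  qed
  then have "(\<lambda>n. x - qr \<beta> x n / \<beta> ^ n) \<longlonglongrightarrow> x - 0" by (intro tendsto_diff) auto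
  then have "(\<lambda>n. \<Sum>i<n. real (qd \<beta> x i) / \<beta> ^ Suc i) \<longlonglongrightarrow> x" using qd_partial[OF assms] by simp
  then have "(\<lambda>i. real (qd \<beta> x i) / \<beta> ^ Suc i) sums x" by (simp add: sums_def)
  then show ?thesis unfolding piv_def by (simp add: sums_iff)
qed

lemma qd_not_ev0: assumes "(\<beta>::real) > 1" "0 < x" "x \<le> 1" shows "\<exists>i\<ge>N. qd \<beta> x i \<noteq> 0"
proof (rule ccontr)
  assume "\<not> ?thesis"
  then have z: "\<forall>i\<ge>N. qd \<beta> x i = 0" by auto
  have "\<forall>k. qr \<beta> x (N + k) = \<beta> ^ k * qr \<beta> x N"
  proof
    fix k show "qr \<beta> x (N + k) = \<beta> ^ k * qr \<beta> x N"
    proof (induction k)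
      case 0 then show ?case by simp
    next
      case (Suc k)
      have "qr \<beta> x (N + Suc k) = \<beta> * qr \<beta> x (N + k) - real (qd \<beta> x (N + k))"
        using qr_Suc[OF assms, of "N + k"] by simp
      then show ?case using Suc z by simp
    qed
  qed
  moreover obtain k where k: "\<beta> ^ k > 1 / qr \<beta> x N" using real_arch_pow assms by blast
  moreover have q: "qr \<beta> x N > 0" "qr \<beta> x (N + k) \<le> 1" using qr_range[OF assms] by auto
  moreover have "\<beta> ^ k * qr \<beta> x N > 1" using k q by (simp add: field_simps)
  ultimately show False by (metis not_le)
qed

lemma qd_mono: assumes "(\<beta>::real) > 1" "0 < x" "x \<le> y" "y \<le> 1"
  shows "\<not> lex_less (qd \<beta> y) (qd \<beta> x)"
proof
  assume "lex_less (qd \<beta> y) (qd \<beta> x)"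
  then obtain n where n: "\<forall>i<n. qd \<beta> y i = qd \<beta> x i" "qd \<beta> y n < qd \<beta> x n"
    unfolding lex_less_def by auto
  have ax: "0 < x" "x \<le> 1" and ay: "0 < y" "y \<le> 1" using assms by auto
  have "\<forall>m\<le>n. qr \<beta> y m - qr \<beta> x m = \<beta> ^ m * (y - x)"
  proof (intro allI impI)
    fix m assume "m \<le> n"
    then show "qr \<beta> y m - qr \<beta> x m = \<beta> ^ m * (y - x)"
    proof (induction m)
      case 0 then show ?case by simp
    next
      case (Suc m)
      have "qr \<beta> y (Suc m) - qr \<beta> x (Suc m) = \<beta> * (qr \<beta> y m - qr \<beta> x m)"
        using qr_Suc[OF assms(1) ay, of m] qr_Suc[OF assms(1) ax, of m] n(1) Suc.prems
        by (simp add: algebra_simps)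
      then show ?case using Suc by simp
    qed
  qed
  then have "qr \<beta> y n - qr \<beta> x n = \<beta> ^ n * (y - x)" by simp
  moreover have "\<beta> ^ n * (y - x) \<ge> 0" using assms by simp
  ultimately have "qr \<beta> x n \<le> qr \<beta> y n" by linarith
  then have "\<lceil>\<beta> * qr \<beta> x n\<rceil> \<le> \<lceil>\<beta> * qr \<beta> y n\<rceil>" using assms by (intro ceiling_mono) simp
  then have "qd \<beta> x n \<le> qd \<beta> y n" unfolding qd_def by (simp add: nat_mono)
  then show False using n(2) by simp
qed

lemma qd_cands: assumes "(\<beta>::real) > 1" shows "qd \<beta> 1 \<in> quasi_greedy_cands \<beta>"
  unfolding quasi_greedy_cands_def digit_seqs_def
  using qd_le_gam[OF assms] qd_not_ev0[OF assms] qd_piv[OF assms] by auto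

lemma qd_max: assumes "(\<beta>::real) > 1" "w \<in> quasi_greedy_cands \<beta>" shows "\<not> lex_less (qd \<beta> 1) w"
proof
  assume "lex_less (qd \<beta> 1) w"
  then obtain n where n: "\<forall>i<n. qd \<beta> 1 i = w i" "qd \<beta> 1 n < w n"
    unfolding lex_less_def by auto
  have wd: "\<forall>i. w i \<le> gam \<beta>" and wn: "\<forall>N. \<exists>i\<ge>N. w i \<noteq> 0" and wp: "piv \<beta> w = 1"
    using assms(2) unfolding quasi_greedy_cands_def digit_seqs_def by auto
  have o: "(0::real) < 1" "(1::real) \<le> 1" by auto
  have sp: "piv \<beta> w = (\<Sum>i<Suc n. real (w i) / \<beta> ^ Suc i) + piv \<beta> (shiftk (Suc n) w) / \<beta> ^ Suc n"
    by (rule piv_split[OF assms(1) wd])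
  have "(\<Sum>i<n. real (w i) / \<beta> ^ Suc i) = (\<Sum>i<n. real (qd \<beta> 1 i) / \<beta> ^ Suc i)"
    using n(1) by simp
  also have "\<dots> = 1 - qr \<beta> 1 n / \<beta> ^ n" by (rule qd_partial[OF assms(1) o])
  finally have s1: "(\<Sum>i<n. real (w i) / \<beta> ^ Suc i) = 1 - qr \<beta> 1 n / \<beta> ^ n" .
  have "real (w n) \<ge> real (qd \<beta> 1 n) + 1" using n(2) by simp
  also have "real (qd \<beta> 1 n) + 1 \<ge> \<beta> * qr \<beta> 1 n" using qd_real[OF assms(1) o, of n]
    using ceiling_correct[of "\<beta> * qr \<beta> 1 n"] by simp
  finally have "real (w n) / \<beta> ^ Suc n \<ge> (\<beta> * qr \<beta> 1 n) / \<beta> ^ Suc n"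
    using assms by (intro divide_right_mono) auto
  then have s2: "real (w n) / \<beta> ^ Suc n \<ge> qr \<beta> 1 n / \<beta> ^ n" using assms by simp
  obtain i where i: "i \<ge> Suc n" "w i \<noteq> 0" using wn by blast
  have "shiftk (Suc n) w (i - Suc n) \<noteq> 0" using i by (simp add: shiftk_def)
  then have "piv \<beta> (shiftk (Suc n) w) > 0" using wd assms by (intro piv_pos[of _ _ "gam \<beta>"]) (auto simp: shiftk_def)
  then have "piv \<beta> (shiftk (Suc n) w) / \<beta> ^ Suc n > 0" using assms by simp
  then have "piv \<beta> w > 1" using sp s1 s2 by simp
  then show False using wp by simp
qed

lemma alpha_eq: assumes "(\<beta>::real) > 1" shows "alpha \<beta> = qd \<beta> 1"
  unfolding alpha_def
proof (rule the_equality)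
  show "qd \<beta> 1 \<in> quasi_greedy_cands \<beta> \<and> (\<forall>b\<in>quasi_greedy_cands \<beta>. \<not> lex_less (qd \<beta> 1) b)"
    using qd_cands[OF assms] qd_max[OF assms] by auto
  fix a assume a: "a \<in> quasi_greedy_cands \<beta> \<and> (\<forall>b\<in>quasi_greedy_cands \<beta>. \<not> lex_less a b)"
  show "a = qd \<beta> 1"
  proof (rule ccontr)
    assume "a \<noteq> qd \<beta> 1"
    then have "lex_less a (qd \<beta> 1) \<or> lex_less (qd \<beta> 1) a" by (rule lex_trich)
    then show False using a qd_cands[OF assms] qd_max[OF assms] by auto
  qed
qed

lemma alpha_cands: "(\<beta>::real) > 1 \<Longrightarrow> alpha \<beta> \<in> quasi_greedy_cands \<beta>"
  using alpha_eq qd_cands by simp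

lemma alpha_piv: "(\<beta>::real) > 1 \<Longrightarrow> piv \<beta> (alpha \<beta>) = 1"
  using alpha_cands unfolding quasi_greedy_cands_def by auto

lemma alpha_le: "(\<beta>::real) > 1 \<Longrightarrow> alpha \<beta> i \<le> gam \<beta>"
  using alpha_cands unfolding quasi_greedy_cands_def digit_seqs_def by auto

lemma alpha_not_ev0: "(\<beta>::real) > 1 \<Longrightarrow> \<exists>i\<ge>N. alpha \<beta> i \<noteq> 0"
  using alpha_cands unfolding quasi_greedy_cands_def by auto

lemma alpha_0: "(\<beta>::real) > 1 \<Longrightarrow> alpha \<beta> 0 = gam \<beta>"
  using alpha_eq qd_one_0 by simp

lemma alpha_shift: assumes "(\<beta>::real) > 1" shows "\<not> lex_less (alpha \<beta>) (shiftk n (alpha \<beta>))"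
proof -
  have "0 < qr \<beta> 1 n" "qr \<beta> 1 n \<le> 1" using qr_range[OF assms, of 1 n] by auto
  then show ?thesis using qd_mono[OF assms, of "qr \<beta> 1 n" 1] by (simp add: alpha_eq[OF assms] qd_shift)
qed

lemma alpha_partial: assumes "(\<beta>::real) > 1"
  shows "(\<Sum>i<n. real (alpha \<beta> i) / \<beta> ^ Suc i) = 1 - qr \<beta> 1 n / \<beta> ^ n"
    "0 < qr \<beta> 1 n" "qr \<beta> 1 n \<le> 1"
  using qd_partial[OF assms, of 1 n] qr_range[OF assms, of 1 n] alpha_eq[OF assms] by auto

lemma zero_lex_alpha: "(\<beta>::real) > 1 \<Longrightarrow> lex_less (\<lambda>_. 0) (alpha \<beta>)"
  using alpha_not_ev0[of \<beta> 0] by (intro lex_zero_less) auto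



lemma Sigma_digits: "w \<in> Sigma_b \<beta> \<Longrightarrow> \<forall>i. w i \<le> gam \<beta>"
  unfolding Sigma_b_def digit_seqs_def by auto

lemma Sigma_shift: assumes "w \<in> Sigma_b \<beta>" shows "shiftk k w \<in> Sigma_b \<beta>"
proof -
  have "\<forall>i. shiftk k w i \<le> gam \<beta>" using assms unfolding Sigma_b_def digit_seqs_def shiftk_def by auto
  moreover have "\<forall>j. lex_less (shiftk j (shiftk k w)) (alpha \<beta>)"
    using assms unfolding Sigma_b_def shiftk_shiftk by blast
  ultimately show ?thesis unfolding Sigma_b_def digit_seqs_def by blast
qed

lemma Sigma_step: assumes "(\<beta>::real) > 1" "w \<in> Sigma_b \<beta>"
  shows "\<exists>n. piv \<beta> w - 1 < (piv \<beta> (shiftk (Suc n) w) - 1) / \<beta> ^ Suc n"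
proof -
  have "lex_less (shiftk 0 w) (alpha \<beta>)" using assms(2) unfolding Sigma_b_def by blast
  then obtain n where n: "\<forall>i<n. w i = alpha \<beta> i" "w n < alpha \<beta> n" unfolding lex_less_def by auto
  have wd: "\<forall>i. w i \<le> gam \<beta>" by (rule Sigma_digits[OF assms(2)])
  have sp: "piv \<beta> w = (\<Sum>i<Suc n. real (w i) / \<beta> ^ Suc i) + piv \<beta> (shiftk (Suc n) w) / \<beta> ^ Suc n"
    by (rule piv_split[OF assms(1) wd])
  have "(\<Sum>i<Suc n. real (w i) / \<beta> ^ Suc i) = (\<Sum>i<n. real (alpha \<beta> i) / \<beta> ^ Suc i) + real (w n) / \<beta> ^ Suc n"
    using n(1) by simp
  also have "real (w n) / \<beta> ^ Suc n \<le> (real (alpha \<beta> n) - 1) / \<beta> ^ Suc n"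
    using n(2) assms(1) by (intro divide_right_mono) auto
  finally have "(\<Sum>i<Suc n. real (w i) / \<beta> ^ Suc i) \<le> (\<Sum>i<Suc n. real (alpha \<beta> i) / \<beta> ^ Suc i) - 1 / \<beta> ^ Suc n"
    by (simp add: diff_divide_distrib)
  also have "\<dots> = 1 - qr \<beta> 1 (Suc n) / \<beta> ^ Suc n - 1 / \<beta> ^ Suc n"
    using alpha_partial(1)[OF assms(1), of "Suc n"] by (simp del: qr.simps)
  finally have A: "(\<Sum>i<Suc n. real (w i) / \<beta> ^ Suc i) \<le> 1 - qr \<beta> 1 (Suc n) / \<beta> ^ Suc n - 1 / \<beta> ^ Suc n" .
  define B where "B = (\<beta>::real) ^ Suc n"
  define Q where "Q = qr \<beta> 1 (Suc n)"
  define P where "P = piv \<beta> (shiftk (Suc n) w)"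
  have B0: "B > 0" unfolding B_def using assms(1) by simp
  have Q0: "Q > 0" unfolding Q_def using alpha_partial(2)[OF assms(1)] by blast
  have "piv \<beta> w - 1 \<le> P / B - Q / B - 1 / B" using sp A unfolding B_def Q_def P_def by linarith
  also have "\<dots> < P / B - 1 / B" using Q0 B0 by simp
  also have "\<dots> = (P - 1) / B" by (simp add: diff_divide_distrib)
  finally have "piv \<beta> w - 1 < (P - 1) / B" .
  then show ?thesis unfolding P_def B_def by blast
qed

lemma Sigma_piv_bound: assumes "(\<beta>::real) > 1" "w \<in> Sigma_b \<beta>"
  shows "piv \<beta> w - 1 \<le> (real (gam \<beta>) / (\<beta> - 1)) / \<beta> ^ N"
  using assms(2)
proof (induction N arbitrary: w)
  case 0
  then show ?case using piv_le[OF assms(1) Sigma_digits[OF 0]] by simp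
next
  case (Suc N)
  obtain n where n: "piv \<beta> w - 1 < (piv \<beta> (shiftk (Suc n) w) - 1) / \<beta> ^ Suc n"
    using Sigma_step[OF assms(1) Suc.prems] by blast
  have ih: "piv \<beta> (shiftk (Suc n) w) - 1 \<le> (real (gam \<beta>) / (\<beta> - 1)) / \<beta> ^ N"
    using Suc.IH Sigma_shift[OF Suc.prems] by blast
  define C where "C = (real (gam \<beta>) / (\<beta> - 1)) / \<beta> ^ N"
  have C0: "C \<ge> 0" unfolding C_def using assms(1) by simp
  have "(piv \<beta> (shiftk (Suc n) w) - 1) / \<beta> ^ Suc n \<le> C / \<beta> ^ Suc n"
    using ih assms(1) unfolding C_def by (intro divide_right_mono) auto
  also have "C / \<beta> ^ Suc n \<le> C / \<beta>"
  proof -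
    have "\<beta> \<le> \<beta> ^ Suc n" using assms(1) by (simp add: power_increasing[of 1 "Suc n" \<beta>, simplified])
    then show ?thesis using C0 assms(1) by (intro divide_left_mono) auto
  qed
  finally show ?case using n unfolding C_def by (simp add: field_simps)
qed

lemma Sigma_piv_le1: assumes "(\<beta>::real) > 1" "w \<in> Sigma_b \<beta>" shows "piv \<beta> w \<le> 1"
proof (rule ccontr)
  assume "\<not> ?thesis"
  then have e: "piv \<beta> w - 1 > 0" by simp
  define C where "C = real (gam \<beta>) / (\<beta> - 1)"
  have "(\<lambda>N. C * (1 / \<beta>) ^ N) \<longlonglongrightarrow> C * 0" using assms(1) by (intro tendsto_mult LIMSEQ_power_zero) auto
  then have "(\<lambda>N. C * (1 / \<beta>) ^ N) \<longlonglongrightarrow> 0" by simp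
  from LIMSEQ_D[OF this e] obtain N0 where "\<forall>n\<ge>N0. norm (C * (1 / \<beta>) ^ n - 0) < piv \<beta> w - 1" by blast
  then have N: "\<bar>C * (1 / \<beta>) ^ N0\<bar> < piv \<beta> w - 1" by simp
  have "C * (1 / \<beta>) ^ N0 = C / \<beta> ^ N0" by (simp add: power_divide)
  moreover have "piv \<beta> w - 1 \<le> C / \<beta> ^ N0" using Sigma_piv_bound[OF assms, of N0] unfolding C_def .
  ultimately show False using N by linarith
qed

lemma Sigma_piv_lt1: assumes "(\<beta>::real) > 1" "w \<in> Sigma_b \<beta>" shows "piv \<beta> w < 1"
proof -
  obtain n where n: "piv \<beta> w - 1 < (piv \<beta> (shiftk (Suc n) w) - 1) / \<beta> ^ Suc n"
    using Sigma_step[OF assms] by blast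
  have "piv \<beta> (shiftk (Suc n) w) \<le> 1" using Sigma_piv_le1[OF assms(1) Sigma_shift[OF assms(2)]] .
  then have "(piv \<beta> (shiftk (Suc n) w) - 1) / \<beta> ^ Suc n \<le> 0" using assms(1)
    by (intro divide_nonpos_pos) auto
  then show ?thesis using n by simp
qed

lemma Sigma_piv_range: assumes "(\<beta>::real) > 1" "w \<in> Sigma_b \<beta>" shows "0 \<le> piv \<beta> w \<and> piv \<beta> w < 1"
  using Sigma_piv_lt1[OF assms] piv_nonneg[OF assms(1) Sigma_digits[OF assms(2)]] by auto

lemma parry_orbit: assumes "(\<beta>::real) > 1" "w \<in> Sigma_b \<beta>"
  shows "(Tb \<beta> ^^ k) (piv \<beta> w) = piv \<beta> (shiftk k w) \<and> greedy \<beta> (piv \<beta> w) k = w k"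
proof (induction k)
  case 0
  have r: "0 \<le> piv \<beta> (shiftk 1 w)" "piv \<beta> (shiftk 1 w) < 1"
    using Sigma_piv_range[OF assms(1) Sigma_shift[OF assms(2)]] by auto
  have "\<beta> * piv \<beta> w = real (w 0) + piv \<beta> (shiftk 1 w)" by (rule piv_split1[OF assms(1) Sigma_digits[OF assms(2)]])
  then have "\<lfloor>\<beta> * piv \<beta> w\<rfloor> = int (w 0)" using r by (simp add: floor_eq_iff)
  then show ?case unfolding greedy_def by simp
next
  case (Suc k)
  define v where "v = shiftk k w"
  have v: "v \<in> Sigma_b \<beta>" unfolding v_def by (rule Sigma_shift[OF assms(2)])
  have r: "0 \<le> piv \<beta> (shiftk 1 v)" "piv \<beta> (shiftk 1 v) < 1"
    using Sigma_piv_range[OF assms(1) Sigma_shift[OF v]] by auto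
  have e: "\<beta> * piv \<beta> v = real (v 0) + piv \<beta> (shiftk 1 v)" by (rule piv_split1[OF assms(1) Sigma_digits[OF v]])
  then have fl: "\<lfloor>\<beta> * piv \<beta> v\<rfloor> = int (v 0)" using r by (simp add: floor_eq_iff)
  have "(Tb \<beta> ^^ Suc k) (piv \<beta> w) = Tb \<beta> (piv \<beta> v)" using Suc v_def by simp
  also have "\<dots> = piv \<beta> (shiftk 1 v)" unfolding Tb_def using fl e by simp
  also have "\<dots> = piv \<beta> (shiftk (Suc k) w)" unfolding v_def by (simp add: shiftk_shiftk)
  finally have 1: "(Tb \<beta> ^^ Suc k) (piv \<beta> w) = piv \<beta> (shiftk (Suc k) w)" .
  define u where "u = shiftk (Suc k) w"
  have u: "u \<in> Sigma_b \<beta>" unfolding u_def by (rule Sigma_shift[OF assms(2)])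
  have r2: "0 \<le> piv \<beta> (shiftk 1 u)" "piv \<beta> (shiftk 1 u) < 1"
    using Sigma_piv_range[OF assms(1) Sigma_shift[OF u]] by auto
  have e2: "\<beta> * piv \<beta> u = real (u 0) + piv \<beta> (shiftk 1 u)" by (rule piv_split1[OF assms(1) Sigma_digits[OF u]])
  then have fl2: "\<lfloor>\<beta> * piv \<beta> u\<rfloor> = int (u 0)" using r2 by (simp add: floor_eq_iff)
  have "greedy \<beta> (piv \<beta> w) (Suc k) = nat \<lfloor>\<beta> * piv \<beta> u\<rfloor>" unfolding greedy_def using 1 u_def by simp
  also have "\<dots> = w (Suc k)" using fl2 unfolding u_def shiftk_def by simp
  finally show ?case using 1 by simp
qed

lemma parry: assumes "(\<beta>::real) > 1" "w \<in> Sigma_b \<beta>" shows "greedy \<beta> (piv \<beta> w) = w"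
  using parry_orbit[OF assms] by auto

lemma Sigma_lex_piv: assumes "(\<beta>::real) > 1" "w \<in> Sigma_b \<beta>" "0 \<le> r" "lex_less (greedy \<beta> r) w"
  shows "r < piv \<beta> w"
proof (rule ccontr)
  assume "\<not> ?thesis"
  then have "piv \<beta> w \<le> r" by simp
  then have "\<not> lex_less (greedy \<beta> r) (greedy \<beta> (piv \<beta> w))"
    using greedy_mono[OF assms(1)] Sigma_piv_range[OF assms(1,2)] by blast
  then show False using parry[OF assms(1,2)] assms(4) by simp
qed

lemma Sigma_lex_mono: assumes "(\<beta>::real) > 1" "u \<in> Sigma_b \<beta>" "w \<in> Sigma_b \<beta>" "lex_less u w"
  shows "piv \<beta> u < piv \<beta> w"
proof -
  have "lex_less (greedy \<beta> (piv \<beta> u)) w" using parry[OF assms(1,2)] assms(4) by simp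
  then show ?thesis using Sigma_lex_piv[OF assms(1,3)] Sigma_piv_range[OF assms(1,2)] by blast
qed

definition selfmin :: "real \<Rightarrow> real \<Rightarrow> bool" where
  "selfmin \<beta> y \<longleftrightarrow> 0 < y \<and> y < 1 \<and> (\<forall>k. (Tb \<beta> ^^ k) y = 0 \<or> y \<le> (Tb \<beta> ^^ k) y)"

lemma Sigma_selfmin: assumes "(\<beta>::real) > 1" "w \<in> Sigma_b \<beta>" "w i \<noteq> 0"
  "\<forall>k. shiftk k w = (\<lambda>_. 0) \<or> \<not> lex_less (shiftk k w) w"
  shows "selfmin \<beta> (piv \<beta> w)"
  unfolding selfmin_def
proof (intro conjI allI)
  show "0 < piv \<beta> w" using piv_pos[OF assms(1) Sigma_digits[OF assms(2)] assms(3)] .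
  show "piv \<beta> w < 1" using Sigma_piv_lt1[OF assms(1,2)] .
  fix k
  have o: "(Tb \<beta> ^^ k) (piv \<beta> w) = piv \<beta> (shiftk k w)" using parry_orbit[OF assms(1,2)] by blast
  show "(Tb \<beta> ^^ k) (piv \<beta> w) = 0 \<or> piv \<beta> w \<le> (Tb \<beta> ^^ k) (piv \<beta> w)"
  proof (cases "shiftk k w = (\<lambda>_. 0)")
    case True then show ?thesis using o by simp
  next
    case False
    then have "\<not> lex_less (shiftk k w) w" using assms(4) by blast
    then have "lex_less w (shiftk k w) \<or> w = shiftk k w" using lex_not_less by blast
    then have "piv \<beta> w \<le> piv \<beta> (shiftk k w)"
    proof
      assume "lex_less w (shiftk k w)"
      then show ?thesis using Sigma_lex_mono[OF assms(1,2) Sigma_shift[OF assms(2)]] by fastforce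
    qed simp
    then show ?thesis using o by simp
  qed
qed



definition shiftself :: "(nat \<Rightarrow> nat) \<Rightarrow> bool" where
  "shiftself x \<longleftrightarrow> (\<forall>k. shiftk k x = (\<lambda>_. 0) \<or> \<not> lex_less (shiftk k x) x)"

lemma rstep_props:
  assumes b: "(\<beta>::real) > 1" and xa: "lex_less x (alpha \<beta>)" and xs: "x \<notin> Sigma_b \<beta>" and ss: "shiftself x"
  shows "\<exists>j\<ge>1. (\<forall>i\<ge>j. rstep \<beta> x i = 0) \<and> (\<forall>L. (\<forall>i\<ge>L. x i = 0) \<longrightarrow> j < L) \<and>
     lex_less x (rstep \<beta> x) \<and> lex_less (rstep \<beta> x) (alpha \<beta>) \<and> shiftself (rstep \<beta> x)"
proof -
  define A where "A = alpha \<beta>"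
  have ex: "\<exists>k. \<not> lex_less (shiftk k x) A"
  proof (rule ccontr)
    assume "\<not> ?thesis"
    then have all: "\<forall>k. lex_less (shiftk k x) A" by blast
    have "\<forall>i. x i \<le> gam \<beta>"
    proof
      fix i show "x i \<le> gam \<beta>"
      proof (rule ccontr)
        assume "\<not> x i \<le> gam \<beta>"
        then have "A 0 < shiftk i x 0" unfolding A_def using alpha_0[OF b] by (simp add: shiftk_def)
        then have "lex_less A (shiftk i x)" by (intro lex_witness[of 0]) auto
        then show False using all lex_asym by blast
      qed
    qed
    then show False using xs all unfolding Sigma_b_def digit_seqs_def A_def by blast
  qed
  define j where "j = (LEAST k. \<not> lex_less (shiftk k x) A)"
  have hj: "\<not> lex_less (shiftk j x) A" unfolding j_def by (rule LeastI_ex[OF ex])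
  have lt: "\<forall>k<j. lex_less (shiftk k x) A" unfolding j_def using not_less_Least by blast
  have j1: "j \<ge> 1" using hj xa unfolding A_def by (cases j) auto
  define y where "y = rstep \<beta> x"
  have yeq: "y = (\<lambda>i. if i + 1 < j then x i else if i + 1 = j then x i + 1 else 0)"
    unfolding y_def rstep_def Let_def j_def A_def by simp
  have y1: "\<And>i. i + 1 < j \<Longrightarrow> y i = x i" using yeq by simp
  have y2: "y (j - 1) = x (j - 1) + 1" using yeq j1 by simp
  have y3: "\<And>i. i \<ge> j \<Longrightarrow> y i = 0" using yeq by simp
  have z0: "lex_less (\<lambda>_. 0) A" unfolding A_def by (rule zero_lex_alpha[OF b])
  have zj: "shiftk j x \<noteq> (\<lambda>_. 0)" using hj z0 by auto
  have supp: "\<forall>L. (\<forall>i\<ge>L. x i = 0) \<longrightarrow> j < L"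
  proof (intro allI impI)
    fix L assume L: "\<forall>i\<ge>L. x i = 0"
    show "j < L"
    proof (rule ccontr)
      assume "\<not> j < L"
      then have "shiftk j x = (\<lambda>_. 0)" using L by (auto simp: shiftk_def)
      then show False using zj by simp
    qed
  qed
  have xy: "lex_less x y"
    by (rule lex_witness[of "j - 1"]) (use y1 y2 in auto)
  have ya: "lex_less y A"
  proof -
    obtain n where n: "\<forall>i<n. x i = A i" "x n < A n" using xa unfolding lex_less_def A_def by auto
    have "\<not> j \<le> n"
    proof
      assume "j \<le> n"
      have "lex_less (shiftk j x) (shiftk j A)"
        by (rule lex_witness[of "n - j"]) (use n \<open>j \<le> n\<close> in \<open>auto simp: shiftk_def\<close>)
      moreover have "\<not> lex_less A (shiftk j A)" unfolding A_def by (rule alpha_shift[OF b])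
      ultimately have "lex_less (shiftk j x) A" using lex_not_less lex_trans by metis
      then show False using hj by simp
    qed
    then have nj: "n < j" by simp
    show ?thesis
    proof (cases "n + 1 < j")
      case True
      show ?thesis by (rule lex_witness[of n]) (use n y1 True in auto)
    next
      case False
      then have nj1: "n = j - 1" using nj by simp
      show ?thesis
      proof (cases "y (j - 1) < A (j - 1)")
        case True
        show ?thesis by (rule lex_witness[of "j - 1"]) (use n y1 nj1 True in auto)
      next
        case False
        then have eqj: "y (j - 1) = A (j - 1)" using y2 n(2) nj1 by simp
        have ya: "\<forall>i<j. y i = A i"
        proof (intro allI impI)
          fix i assume "i < j"
          show "y i = A i"
          proof (cases "i + 1 < j")
            case True then show ?thesis using y1 n(1) nj1 by auto
          next
            case False then have "i = j - 1" using \<open>i < j\<close> by simp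
            then show ?thesis using eqj by simp
          qed
        qed
        have exi: "\<exists>i. i \<ge> j \<and> A i \<noteq> 0" using alpha_not_ev0[OF b, of j] unfolding A_def by blast
        define i0 where "i0 = (LEAST i. i \<ge> j \<and> A i \<noteq> 0)"
        have i0: "i0 \<ge> j" "A i0 \<noteq> 0" unfolding i0_def using LeastI_ex[OF exi] by auto
        have i0b: "\<forall>i<i0. \<not> (i \<ge> j \<and> A i \<noteq> 0)" unfolding i0_def using not_less_Least by blast
        show ?thesis
        proof (rule lex_witness[of i0])
          show "\<forall>i<i0. y i = A i"
          proof (intro allI impI)
            fix i assume "i < i0"
            then show "y i = A i" using ya i0b y3 by (cases "i < j") auto
          qed
          show "y i0 < A i0" using y3 i0 by simp
        qed
      qed
    qed
  qed
  have ssy: "shiftself y" unfolding shiftself_def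
  proof
    fix k
    show "shiftk k y = (\<lambda>_. 0) \<or> \<not> lex_less (shiftk k y) y"
    proof (cases "k = 0")
      case True then show ?thesis using lex_irrefl by simp
    next
      case k0: False
      show ?thesis
      proof (cases "j \<le> k")
        case True then have "shiftk k y = (\<lambda>_. 0)" using y3 by (auto simp: shiftk_def)
        then show ?thesis by simp
      next
        case False
        then have kj: "k < j" by simp
        have "shiftk k x \<noteq> (\<lambda>_. 0)"
        proof
          assume "shiftk k x = (\<lambda>_. 0)"
          then have "\<forall>i. x (i + k) = 0" by (metis shiftk_def)
          then have "shiftk j x = (\<lambda>_. 0)" using kj
            by (auto simp: shiftk_def) (metis add.commute le_add_diff_inverse less_imp_le_nat add.assoc)
          then show False using zj by simp
        qed
        then have "\<not> lex_less (shiftk k x) x" using ss unfolding shiftself_def by blast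
        then have c: "lex_less x (shiftk k x) \<or> x = shiftk k x" using lex_not_less by blast
        define N0 where "N0 = j - 1 - k"
        have N0j: "N0 + k = j - 1" "N0 + 1 < j" unfolding N0_def using kj k0 by auto
        have "lex_less y (shiftk k y)"
        proof -
          have "(\<forall>i<N0. x (i + k) = x i) \<and> x N0 \<le> x (N0 + k) \<or>
                (\<exists>n<N0. (\<forall>i<n. x (i + k) = x i) \<and> x n < x (n + k))"
          proof (cases "x = shiftk k x")
            case True
            then have "\<forall>i. x (i + k) = x i" by (metis shiftk_def)
            then show ?thesis by simp
          next
            case False
            then obtain n where n: "\<forall>i<n. x i = x (i + k)" "x n < x (n + k)"
              using c unfolding lex_less_def shiftk_def by auto
            show ?thesis
            proof (cases "n < N0")
              case True then show ?thesis using n by auto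
            next
              case False
              then have "\<forall>i<N0. x (i + k) = x i" using n by auto
              moreover have "x N0 \<le> x (N0 + k)" using n False by (cases "n = N0") auto
              ultimately show ?thesis by simp
            qed
          qed
          then show ?thesis
          proof
            assume h: "(\<forall>i<N0. x (i + k) = x i) \<and> x N0 \<le> x (N0 + k)"
            show ?thesis
            proof (rule lex_witness[of N0])
              show "\<forall>i<N0. y i = shiftk k y i"
              proof (intro allI impI)
                fix i assume "i < N0"
                then have "i + k + 1 < j" "i + 1 < j" using N0j by auto
                then show "y i = shiftk k y i" using y1 h \<open>i < N0\<close> by (simp add: shiftk_def)
              qed
              show "y N0 < shiftk k y N0" using y1[OF N0j(2)] y2 N0j(1) h by (simp add: shiftk_def)
            qed
          next
            assume "\<exists>n<N0. (\<forall>i<n. x (i + k) = x i) \<and> x n < x (n + k)"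
            then obtain n where n: "n < N0" "\<forall>i<n. x (i + k) = x i" "x n < x (n + k)" by blast
            show ?thesis
            proof (rule lex_witness[of n])
              show "\<forall>i<n. y i = shiftk k y i"
              proof (intro allI impI)
                fix i assume "i < n"
                then have "i + k + 1 < j" "i + 1 < j" using N0j n by auto
                then show "y i = shiftk k y i" using y1 n \<open>i < n\<close> by (simp add: shiftk_def)
              qed
              have "n + k + 1 < j" "n + 1 < j" using N0j n by auto
              then show "y n < shiftk k y n" using y1 n by (simp add: shiftk_def)
            qed
          qed
        qed
        then show ?thesis using lex_asym by blast
      qed
    qed
  qed
  show ?thesis
    using j1 y3 supp xy ya ssy unfolding y_def A_def by blast
qed



definition inv3 :: "real \<Rightarrow> (nat \<Rightarrow> nat) \<Rightarrow> (nat \<Rightarrow> nat) \<Rightarrow> bool" where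
  "inv3 \<beta> w x \<longleftrightarrow> lex_less x (alpha \<beta>) \<and> shiftself x \<and> lex_less w x"

lemma rstep_term: assumes b: "(\<beta>::real) > 1"
  shows "\<forall>x. inv3 \<beta> w x \<and> (\<forall>i\<ge>L. x i = 0) \<longrightarrow> (\<exists>n. (rstep \<beta> ^^ n) x \<in> Sigma_b \<beta>)"
proof (induction L rule: less_induct)
  case (less L)
  show ?case
  proof (intro allI impI)
    fix x assume h: "inv3 \<beta> w x \<and> (\<forall>i\<ge>L. x i = 0)"
    show "\<exists>n. (rstep \<beta> ^^ n) x \<in> Sigma_b \<beta>"
    proof (cases "x \<in> Sigma_b \<beta>")
      case True then show ?thesis by (intro exI[of _ 0]) simp
    next
      case False
      obtain j where j: "j \<ge> 1" "\<forall>i\<ge>j. rstep \<beta> x i = 0" "\<forall>L. (\<forall>i\<ge>L. x i = 0) \<longrightarrow> j < L"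
        "lex_less x (rstep \<beta> x)" "lex_less (rstep \<beta> x) (alpha \<beta>)" "shiftself (rstep \<beta> x)"
        using rstep_props[OF b _ False] h unfolding inv3_def by blast
      have jL: "j < L" using j(3) h by blast
      have "inv3 \<beta> w (rstep \<beta> x)" using h j lex_trans unfolding inv3_def by blast
      then obtain n where "(rstep \<beta> ^^ n) (rstep \<beta> x) \<in> Sigma_b \<beta>" using less.IH[OF jL] j(2) by blast
      then have "(rstep \<beta> ^^ Suc n) x \<in> Sigma_b \<beta>" by (simp add: funpow_Suc_right del: funpow.simps)
      then show ?thesis by blast
    qed
  qed
qed

lemma rstar_good:
  assumes b: "(\<beta>::real) > 1" and sm: "selfmin \<beta> r" and m1: "m \<ge> 1"
    and wm: "greedy \<beta> r (m - 1) \<noteq> 0" and wz: "\<forall>i\<ge>m. greedy \<beta> r i = 0" and bl: "blen \<beta> r = m"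
  shows "rstar \<beta> r = 1 \<or> (selfmin \<beta> (rstar \<beta> r) \<and> r < rstar \<beta> r)"
proof -
  define w where "w = greedy \<beta> r"
  have r0: "0 \<le> r" "r < 1" using sm unfolding selfmin_def by auto
  have ssw: "shiftself w" unfolding shiftself_def
  proof
    fix k
    have e: "shiftk k w = greedy \<beta> ((Tb \<beta> ^^ k) r)" unfolding w_def by (rule greedy_shift)
    have "(Tb \<beta> ^^ k) r = 0 \<or> r \<le> (Tb \<beta> ^^ k) r" using sm unfolding selfmin_def by blast
    then show "shiftk k w = (\<lambda>_. 0) \<or> \<not> lex_less (shiftk k w) w"
    proof
      assume "(Tb \<beta> ^^ k) r = 0" then show ?thesis using e greedy_zero by simp
    next
      assume "r \<le> (Tb \<beta> ^^ k) r"
      then show ?thesis using e greedy_mono[OF b r0(1)] unfolding w_def by simp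
    qed
  qed
  define p where "p = perw \<beta> r"
  have peq: "p = (\<lambda>i. w (i mod m))" unfolding p_def perw_def w_def bl by simp
  have wm': "w (m - 1) \<noteq> 0" using wm unfolding w_def .
  have wz': "\<And>i. i \<ge> m \<Longrightarrow> w i = 0" using wz unfolding w_def by simp
  have pw: "\<And>i. i < m \<Longrightarrow> p i = w i" using peq by simp
  have pm: "p (m - 1) \<noteq> 0" using pw wm' m1 by simp
  have psh: "\<forall>k. \<not> lex_less (shiftk k p) p"
  proof
    fix k
    define k' where "k' = k mod m"
    have km: "k' < m" unfolding k'_def using m1 by simp
    have sk: "shiftk k p = shiftk k' p"
      unfolding peq shiftk_def k'_def by (auto simp: mod_add_right_eq)
    show "\<not> lex_less (shiftk k p) p"
    proof (cases "k' = 0")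
      case True then show ?thesis using sk lex_irrefl by simp
    next
      case False
      have "shiftk k' w (m - 1 - k') \<noteq> 0" using wm' km False by (simp add: shiftk_def)
      then have "shiftk k' w \<noteq> (\<lambda>_. 0)" by auto
      then have nl: "\<not> lex_less (shiftk k' w) w" using ssw unfolding shiftself_def by blast
      have "shiftk k' w \<noteq> w"
      proof
        assume "shiftk k' w = w"
        then have "w (m - 1 + k') = w (m - 1)" by (metis shiftk_def)
        moreover have "m - 1 + k' \<ge> m" using False m1 by simp
        ultimately show False using wz' wm' by simp
      qed
      then have "lex_less w (shiftk k' w)" using nl lex_trich by blast
      then obtain n where n: "\<forall>i<n. w i = w (i + k')" "w n < w (n + k')"
        unfolding lex_less_def shiftk_def by auto
      have nk: "n + k' < m" using n(2) wz' by (metis not_le not_less0)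
      have "lex_less p (shiftk k' p)"
      proof (rule lex_witness[of n])
        show "\<forall>i<n. p i = shiftk k' p i" using n(1) nk pw by (auto simp: shiftk_def)
        show "p n < shiftk k' p n" using n(2) nk pw by (simp add: shiftk_def)
      qed
      then show ?thesis using sk lex_asym by simp
    qed
  qed
  have ssp: "shiftself p" using psh unfolding shiftself_def by blast
  have wp: "lex_less w p"
  proof -
    have exi: "\<exists>i. i \<ge> m \<and> p i \<noteq> 0"
    proof (intro exI conjI)
      show "(m - 1) + m \<ge> m" by simp
      have "((m - 1) + m) mod m = (m - 1) mod m" by (simp only: mod_add_self2)
      also have "\<dots> = m - 1" using m1 by simp
      finally show "p ((m - 1) + m) \<noteq> 0" using peq wm' by simp
    qed
    define n0 where "n0 = (LEAST i. i \<ge> m \<and> p i \<noteq> 0)"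
    have n0: "n0 \<ge> m" "p n0 \<noteq> 0" unfolding n0_def using LeastI_ex[OF exi] by auto
    have n0b: "\<forall>i<n0. \<not> (i \<ge> m \<and> p i \<noteq> 0)" unfolding n0_def using not_less_Least by blast
    show ?thesis
    proof (rule lex_witness[of n0])
      show "\<forall>i<n0. w i = p i"
      proof (intro allI impI)
        fix i assume "i < n0"
        then show "w i = p i" using n0b pw wz' by (cases "i < m") auto
      qed
      show "w n0 < p n0" using n0 wz' by simp
    qed
  qed
  have p0: "p 0 = w 0" using pw m1 by simp
  show ?thesis
  proof (cases "p \<in> Sigma_b \<beta>")
    case True
    then have rs: "rstar \<beta> r = piv \<beta> p" unfolding rstar_def p_def by simp
    have "selfmin \<beta> (piv \<beta> p)" by (rule Sigma_selfmin[OF b True pm]) (use ssp in \<open>unfold shiftself_def\<close>)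
    moreover have "r < piv \<beta> p" using Sigma_lex_piv[OF b True r0(1)] wp unfolding w_def by simp
    ultimately show ?thesis using rs by simp
  next
    case pn: False
    show ?thesis
    proof (cases "greedy \<beta> r 0 = gam \<beta>")
      case True
      then have "rstar \<beta> r = piv \<beta> (alpha \<beta>)" unfolding rstar_def using pn p_def by simp
      then show ?thesis using alpha_piv[OF b] by simp
    next
      case False
      then have w0: "w 0 < gam \<beta>" using greedy_le_gam[OF b r0, of 0] unfolding w_def by simp
      have pa: "lex_less p (alpha \<beta>)" by (rule lex_witness[of 0]) (use p0 w0 alpha_0[OF b] in auto)
      have ip: "inv3 \<beta> w p" unfolding inv3_def using pa ssp wp by blast
      obtain j where j: "j \<ge> 1" "\<forall>i\<ge>j. rstep \<beta> p i = 0"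
        "lex_less p (rstep \<beta> p)" "lex_less (rstep \<beta> p) (alpha \<beta>)" "shiftself (rstep \<beta> p)"
        using rstep_props[OF b pa pn ssp] by blast
      have "inv3 \<beta> w (rstep \<beta> p)" using j wp lex_trans unfolding inv3_def by blast
      then obtain n where "(rstep \<beta> ^^ n) (rstep \<beta> p) \<in> Sigma_b \<beta>" using rstep_term[OF b] j(2) by blast
      then have "(rstep \<beta> ^^ Suc n) p \<in> Sigma_b \<beta>" by (simp add: funpow_Suc_right del: funpow.simps)
      then have exn: "\<exists>n. (rstep \<beta> ^^ n) p \<in> Sigma_b \<beta>" by blast
      define N where "N = (LEAST n. (rstep \<beta> ^^ n) p \<in> Sigma_b \<beta>)"
      have qS: "(rstep \<beta> ^^ N) p \<in> Sigma_b \<beta>" unfolding N_def by (rule LeastI_ex[OF exn])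
      have before: "\<And>n. n < N \<Longrightarrow> (rstep \<beta> ^^ n) p \<notin> Sigma_b \<beta>" unfolding N_def using not_less_Least by blast
      have "\<forall>n\<le>N. inv3 \<beta> w ((rstep \<beta> ^^ n) p)"
      proof (intro allI impI)
        fix n assume "n \<le> N"
        then show "inv3 \<beta> w ((rstep \<beta> ^^ n) p)"
        proof (induction n)
          case 0 then show ?case using ip by simp
        next
          case (Suc n)
          then have iv: "inv3 \<beta> w ((rstep \<beta> ^^ n) p)" by simp
          have nS: "(rstep \<beta> ^^ n) p \<notin> Sigma_b \<beta>" using before Suc.prems by simp
          define x where "x = (rstep \<beta> ^^ n) p"
          have xa: "lex_less x (alpha \<beta>)" and xs: "shiftself x" and wx: "lex_less w x"
            using iv unfolding inv3_def x_def by auto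
          have nS': "x \<notin> Sigma_b \<beta>" using nS unfolding x_def .
          have rp: "lex_less x (rstep \<beta> x) \<and> lex_less (rstep \<beta> x) (alpha \<beta>) \<and> shiftself (rstep \<beta> x)"
            using rstep_props[OF b xa nS' xs] by blast
          have "lex_less w (rstep \<beta> x)" using lex_trans[OF wx] rp by blast
          then have "inv3 \<beta> w (rstep \<beta> x)" using rp unfolding inv3_def by blast
          then show ?case unfolding x_def by simp
        qed
      qed
      then have iq: "inv3 \<beta> w ((rstep \<beta> ^^ N) p)" by simp
      define q where "q = (rstep \<beta> ^^ N) p"
      have rs: "rstar \<beta> r = piv \<beta> q" unfolding rstar_def q_def N_def p_def using pn False p_def by simp
      have qS': "q \<in> Sigma_b \<beta>" using qS q_def by simp
      have wq: "lex_less w q" using iq q_def unfolding inv3_def by simp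
      have "\<exists>i. q i \<noteq> 0"
      proof (rule ccontr)
        assume "\<not> ?thesis" then have "q = (\<lambda>_. 0)" by auto
        then show False using wq not_lex_less_zero by simp
      qed
      then obtain i where qi: "q i \<noteq> 0" by blast
      have "selfmin \<beta> (piv \<beta> q)"
        by (rule Sigma_selfmin[OF b qS' qi]) (use iq q_def in \<open>unfold inv3_def shiftself_def, simp\<close>)
      moreover have "r < piv \<beta> q" using Sigma_lex_piv[OF b qS' r0(1)] wq unfolding w_def by simp
      ultimately show ?thesis using rs by simp
    qed
  qed
qed



lemma Tb_inv_pow: assumes "(\<beta>::real) > 1"
  shows "Tb \<beta> (1 / \<beta> ^ Suc j) = (if j = 0 then 0 else 1 / \<beta> ^ j)"
proof -
  have e: "\<beta> * (1 / \<beta> ^ Suc j) = 1 / \<beta> ^ j" using assms by simp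
  show ?thesis
  proof (cases "j = 0")
    case True then show ?thesis unfolding Tb_def using e by simp
  next
    case False
    have "1 / \<beta> ^ j < 1" using assms False by (simp add: one_less_power)
    moreover have "0 \<le> 1 / \<beta> ^ j" using assms by simp
    ultimately have "\<lfloor>1 / \<beta> ^ j\<rfloor> = 0" by (simp add: floor_eq_iff)
    then show ?thesis unfolding Tb_def using e False by simp
  qed
qed

lemma Tb_iter_inv_pow: assumes "(\<beta>::real) > 1"
  shows "(Tb \<beta> ^^ k) (1 / \<beta> ^ Suc n) = (if k < Suc n then 1 / \<beta> ^ (Suc n - k) else 0)"
proof (induction k)
  case 0 then show ?case by simp
next
  case (Suc k)
  show ?case
  proof (cases "k < Suc n")
    case True
    then obtain j where j: "Suc n - k = Suc j" by (metis Suc_diff_le less_Suc_eq_le)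
    have "(Tb \<beta> ^^ Suc k) (1 / \<beta> ^ Suc n) = Tb \<beta> (1 / \<beta> ^ Suc j)" using Suc True j by simp
    also have "\<dots> = (if j = 0 then 0 else 1 / \<beta> ^ j)" by (rule Tb_inv_pow[OF assms])
    finally have e: "(Tb \<beta> ^^ Suc k) (1 / \<beta> ^ Suc n) = (if j = 0 then 0 else 1 / \<beta> ^ j)" .
    have j2: "Suc n - Suc k = j" using j by simp
    show ?thesis
    proof (cases "j = 0")
      case True then have "\<not> Suc k < Suc n" using j by simp
      then show ?thesis using e True by simp
    next
      case False then have "Suc k < Suc n" using j by simp
      then show ?thesis using e False j2 by simp
    qed
  next
    case False
    then show ?thesis using Suc by (simp add: Tb_zero)
  qed
qed

lemma selfmin_inv_pow: assumes "(\<beta>::real) > 1" shows "selfmin \<beta> (1 / \<beta> ^ Suc n)"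
  unfolding selfmin_def
proof (intro conjI allI)
  show "0 < 1 / \<beta> ^ Suc n" using assms by simp
  have "1 < \<beta> ^ Suc n" using assms by (intro one_less_power) auto
  then show "1 / \<beta> ^ Suc n < 1" by simp
  fix k
  show "(Tb \<beta> ^^ k) (1 / \<beta> ^ Suc n) = 0 \<or> 1 / \<beta> ^ Suc n \<le> (Tb \<beta> ^^ k) (1 / \<beta> ^ Suc n)"
  proof (cases "k < Suc n")
    case True
    have "\<beta> ^ (Suc n - k) \<le> \<beta> ^ Suc n" using assms by (intro power_increasing) auto
    then have "1 / \<beta> ^ Suc n \<le> 1 / \<beta> ^ (Suc n - k)" using assms by (intro divide_left_mono) auto
    then show ?thesis using Tb_iter_inv_pow[OF assms] True by simp
  next
    case False then show ?thesis using Tb_iter_inv_pow[OF assms] by simp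
  qed
qed

lemma Kset_mid: "0 < t \<Longrightarrow> t < 1 \<Longrightarrow> Kset \<beta> t = {x \<in> {0..<1}. \<forall>k. (Tb \<beta> ^^ k) x \<notin> {0<..<t}}"
  unfolding Kset_def by simp

lemma selfmin_in_K: assumes "selfmin \<beta> y" "0 < t" "t \<le> y" shows "y \<in> Kset \<beta> t"
proof -
  have y: "0 < y" "y < 1" "\<forall>k. (Tb \<beta> ^^ k) y = 0 \<or> y \<le> (Tb \<beta> ^^ k) y" using assms(1) unfolding selfmin_def by auto
  have "\<forall>k. (Tb \<beta> ^^ k) y \<notin> {0<..<t}"
  proof
    fix k show "(Tb \<beta> ^^ k) y \<notin> {0<..<t}" using y(3)[rule_format, of k] assms(3) by auto
  qed
  then show ?thesis using Kset_mid[of t \<beta>] assms y by auto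
qed

lemma notin_K: assumes "0 < y" "y < t" "t \<le> 1" shows "y \<notin> Kset \<beta> t"
proof (cases "t = 1")
  case True then show ?thesis using assms unfolding Kset_def by auto
next
  case False
  then have "\<exists>k. (Tb \<beta> ^^ k) y \<in> {0<..<t}" using assms by (intro exI[of _ 0]) auto
  then show ?thesis using Kset_mid[of t \<beta>] assms False by auto
qed

lemma selfmin_near: assumes "selfmin \<beta> y" "0 < t" "t < 1" "\<delta> > 0" "\<bar>y - t\<bar> < \<delta>"
  shows "\<exists>t'\<in>{0..1}. \<bar>t' - t\<bar> < \<delta> \<and> Kset \<beta> t' \<noteq> Kset \<beta> t"
proof -
  have y: "0 < y" "y < 1" using assms(1) unfolding selfmin_def by auto
  show ?thesis
  proof (cases "y < t")
    case True
    have "y \<in> Kset \<beta> y" using selfmin_in_K[OF assms(1) y(1)] by simp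
    moreover have "y \<notin> Kset \<beta> t" using notin_K[OF y(1) True] assms by simp
    ultimately show ?thesis using y assms(5) by (intro bexI[of _ y]) auto
  next
    case False
    define t' where "t' = min 1 ((y + t + \<delta>) / 2)"
    have yt: "y < t + \<delta>" using assms(5) by linarith
    have t'1: "y < t'" "t' \<le> 1" "t' < t + \<delta>" unfolding t'_def using y yt by (auto simp: min_less_iff_disj)
    have "y \<in> Kset \<beta> t" using selfmin_in_K[OF assms(1) assms(2)] False by simp
    moreover have "y \<notin> Kset \<beta> t'" using notin_K[OF y(1) t'1(1) t'1(2)] .
    ultimately show ?thesis using t'1 False y by (intro bexI[of _ t']) auto
  qed
qed

lemma selfmin_Ubif: assumes "selfmin \<beta> y" shows "y \<in> Ubif \<beta>"
proof -
  have y: "0 < y" "y < 1" using assms unfolding selfmin_def by auto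
  have "\<forall>\<delta>>0. \<exists>t'\<in>{0..1}. \<bar>t' - y\<bar> < \<delta> \<and> Kset \<beta> t' \<noteq> Kset \<beta> y"
    using selfmin_near[OF assms y] by simp
  then show ?thesis unfolding Ubif_def bifurcation_def using y by auto
qed

lemma left_lin: assumes "(\<beta>::real) > 1"
  shows "(Tb \<beta> ^^ j) a = 0 \<or> (\<exists>\<epsilon>>0. \<forall>x. a - \<epsilon> < x \<and> x \<le> a \<longrightarrow> (Tb \<beta> ^^ j) x = (Tb \<beta> ^^ j) a - \<beta> ^ j * (a - x))"
proof (induction j)
  case 0 then show ?case by (intro disjI2 exI[of _ 1]) auto
next
  case (Suc j)
  show ?case
  proof (cases "(Tb \<beta> ^^ j) a = 0")
    case True then show ?thesis by (simp add: Tb_zero)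
  next
    case False
    then obtain \<epsilon> where e: "\<epsilon> > 0" "\<forall>x. a - \<epsilon> < x \<and> x \<le> a \<longrightarrow> (Tb \<beta> ^^ j) x = (Tb \<beta> ^^ j) a - \<beta> ^ j * (a - x)"
      using Suc by blast
    define z where "z = (Tb \<beta> ^^ j) a"
    show ?thesis
    proof (cases "of_int \<lfloor>\<beta> * z\<rfloor> = \<beta> * z")
      case True
      have "(Tb \<beta> ^^ Suc j) a = Tb \<beta> z" unfolding z_def by simp
      also have "\<dots> = 0" unfolding Tb_def using True by linarith
      finally have "(Tb \<beta> ^^ Suc j) a = 0" .
      then show ?thesis by simp
    next
      case False
      then have fz: "of_int \<lfloor>\<beta> * z\<rfloor> < \<beta> * z" using of_int_floor_le[of "\<beta> * z"] by linarith
      define e' where "e' = min \<epsilon> ((\<beta> * z - of_int \<lfloor>\<beta> * z\<rfloor>) / \<beta> ^ Suc j)"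
      have e'0: "e' > 0" unfolding e'_def using e(1) fz assms by simp
      show ?thesis
      proof (intro disjI2 exI[of _ e'] conjI allI impI)
        show "e' > 0" by fact
        fix x assume x: "a - e' < x \<and> x \<le> a"
        have "a - \<epsilon> < x" using x unfolding e'_def by auto
        then have tx: "(Tb \<beta> ^^ j) x = z - \<beta> ^ j * (a - x)" using e(2)[rule_format, of x] x unfolding z_def by blast
        have d0: "0 \<le> \<beta> ^ Suc j * (a - x)" using x assms by simp
        have "e' \<le> (\<beta> * z - of_int \<lfloor>\<beta> * z\<rfloor>) / \<beta> ^ Suc j" unfolding e'_def by (rule min.cobounded2)
        then have "a - x < (\<beta> * z - of_int \<lfloor>\<beta> * z\<rfloor>) / \<beta> ^ Suc j" using x by linarith
        then have d1: "\<beta> ^ Suc j * (a - x) < \<beta> * z - of_int \<lfloor>\<beta> * z\<rfloor>" using assms by (simp add: field_simps)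
        have bx: "\<beta> * (Tb \<beta> ^^ j) x = \<beta> * z - \<beta> ^ Suc j * (a - x)" unfolding tx by (simp add: algebra_simps)
        have "\<lfloor>\<beta> * (Tb \<beta> ^^ j) x\<rfloor> = \<lfloor>\<beta> * z\<rfloor>" unfolding bx floor_eq_iff
          using d0 d1 floor_correct[of "\<beta> * z"] by linarith
        then have "(Tb \<beta> ^^ Suc j) x = \<beta> * (Tb \<beta> ^^ j) x - of_int \<lfloor>\<beta> * z\<rfloor>" by (simp add: Tb_def)
        also have "\<dots> = (\<beta> * z - of_int \<lfloor>\<beta> * z\<rfloor>) - \<beta> ^ Suc j * (a - x)" using bx by simp
        also have "\<beta> * z - of_int \<lfloor>\<beta> * z\<rfloor> = (Tb \<beta> ^^ Suc j) a" unfolding z_def by (simp add: Tb_def)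
        finally show "(Tb \<beta> ^^ Suc j) x = (Tb \<beta> ^^ Suc j) a - \<beta> ^ Suc j * (a - x)" .
      qed
    qed
  qed
qed

lemma left_limit_selfmin: assumes b: "(\<beta>::real) > 1" and a: "0 < a" "a < 1"
  and ap: "\<forall>\<eta>>0. \<exists>y. selfmin \<beta> y \<and> a - \<eta> < y \<and> y < a"
  shows "selfmin \<beta> a"
  unfolding selfmin_def
proof (intro conjI allI a)
  fix j
  show "(Tb \<beta> ^^ j) a = 0 \<or> a \<le> (Tb \<beta> ^^ j) a"
  proof (rule ccontr)
    assume "\<not> ?thesis"
    then have nz: "(Tb \<beta> ^^ j) a \<noteq> 0" and lt: "(Tb \<beta> ^^ j) a < a" by auto
    define z where "z = (Tb \<beta> ^^ j) a"
    have z0: "z > 0" using nz Tb_iter_nonneg[where x=a and \<beta>=\<beta> and k=j] a unfolding z_def by auto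
    obtain \<epsilon> where e: "\<epsilon> > 0" "\<forall>x. a - \<epsilon> < x \<and> x \<le> a \<longrightarrow> (Tb \<beta> ^^ j) x = z - \<beta> ^ j * (a - x)"
      using left_lin[where j=j and a=a, OF b] nz unfolding z_def by blast
    define \<eta> where "\<eta> = min \<epsilon> (z / \<beta> ^ j)"
    have "\<eta> > 0" unfolding \<eta>_def using e z0 b by simp
    then obtain y where y: "selfmin \<beta> y" "a - \<eta> < y" "y < a" using ap by blast
    have "a - \<epsilon> < y" using y unfolding \<eta>_def by auto
    then have ty: "(Tb \<beta> ^^ j) y = z - \<beta> ^ j * (a - y)" using e(2)[rule_format, of y] y by auto
    have "a - y < z / \<beta> ^ j" using y unfolding \<eta>_def by simp
    then have "\<beta> ^ j * (a - y) < z" using b by (simp add: field_simps)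
    then have "(Tb \<beta> ^^ j) y \<noteq> 0" using ty by simp
    then have "y \<le> (Tb \<beta> ^^ j) y" using y(1) unfolding selfmin_def by blast
    moreover have "a - y \<le> \<beta> ^ j * (a - y)"
    proof -
      have "1 \<le> \<beta> ^ j" using b by (intro one_le_power) auto
      then show ?thesis using y(3) by (simp add: mult_le_cancel_right1)
    qed
    ultimately have "a \<le> z" using ty by linarith
    then show False using lt unfolding z_def by simp
  qed
qed



lemma right_ext: assumes b: "(\<beta>::real) > 1" and sm: "selfmin \<beta> a" and nz: "\<forall>j. (Tb \<beta> ^^ j) a \<noteq> 0"
  and eta: "\<eta> > 0" "a + \<eta> \<le> 1"
  shows "\<exists>y. selfmin \<beta> y \<and> a < y \<and> y < a + \<eta>"
proof -
  have a01: "0 < a" "a < 1" using sm unfolding selfmin_def by auto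
  have ge: "\<And>j. a \<le> (Tb \<beta> ^^ j) a" using sm nz unfolding selfmin_def by blast
  have lt1: "\<And>j. (Tb \<beta> ^^ j) a < 1" using Tb_iter_range[of a] a01 by auto
  obtain n0 where n0: "1 / \<eta> < \<beta> ^ n0" using real_arch_pow[OF b] by blast
  define n where "n = Suc n0"
  have "\<beta> ^ n0 \<le> \<beta> ^ n" unfolding n_def using b by (intro power_increasing) auto
  then have "1 / \<eta> < \<beta> ^ n" using n0 by simp
  then have bn: "1 / \<beta> ^ n < \<eta>" using eta b by (simp add: field_simps)
  define h where "h = (\<lambda>j. (1 - (Tb \<beta> ^^ Suc j) a) / \<beta> ^ Suc j)"
  have hpos: "\<And>j. h j > 0"
  proof -
    fix j
    have "(Tb \<beta> ^^ Suc j) a < 1" by (rule lt1)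
    then have "0 < 1 - (Tb \<beta> ^^ Suc j) a" by linarith
    then show "h j > 0" unfolding h_def using b by (intro divide_pos_pos) auto
  qed
  define \<epsilon> where "\<epsilon> = Min (h ` {..<n})"
  have fin: "finite (h ` {..<n})" "h ` {..<n} \<noteq> {}" unfolding n_def by auto
  have "\<epsilon> \<in> h ` {..<n}" unfolding \<epsilon>_def using Min_in[OF fin] .
  then have exj: "\<exists>j. j < n \<and> h j = \<epsilon>" by auto
  define j0 where "j0 = (LEAST j. j < n \<and> h j = \<epsilon>)"
  have j0: "j0 < n" "h j0 = \<epsilon>" unfolding j0_def using LeastI_ex[OF exj] by auto
  have j0b: "\<And>i. i < j0 \<Longrightarrow> \<not> (i < n \<and> h i = \<epsilon>)" unfolding j0_def using not_less_Least by blast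
  have hmin: "\<And>i. i < n \<Longrightarrow> \<epsilon> \<le> h i" unfolding \<epsilon>_def using fin by auto
  have hi: "\<And>i. i < j0 \<Longrightarrow> \<epsilon> < h i"
  proof -
    fix i assume "i < j0"
    then have "i < n" "h i \<noteq> \<epsilon>" using j0 j0b by auto
    then show "\<epsilon> < h i" using hmin by force
  qed
  have e0: "\<epsilon> > 0" using j0 hpos by force
  have "\<epsilon> \<le> h n0" using hmin unfolding n_def by simp
  also have "h n0 \<le> 1 / \<beta> ^ n" unfolding h_def n_def using ge[of "Suc n0"] a01 b by (intro divide_right_mono) auto
  finally have en: "\<epsilon> < \<eta>" using bn by simp
  have lin: "\<And>i. i \<le> j0 \<Longrightarrow> (Tb \<beta> ^^ i) (a + \<epsilon>) = (Tb \<beta> ^^ i) a + \<beta> ^ i * \<epsilon>"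
  proof -
    fix i assume "i \<le> j0"
    then show "(Tb \<beta> ^^ i) (a + \<epsilon>) = (Tb \<beta> ^^ i) a + \<beta> ^ i * \<epsilon>"
    proof (induction i)
      case 0 then show ?case by simp
    next
      case (Suc i)
      then have ij: "i < j0" by simp
      define u where "u = (Tb \<beta> ^^ i) a"
      define v where "v = (Tb \<beta> ^^ Suc i) a + \<beta> ^ Suc i * \<epsilon>"
      have ih: "(Tb \<beta> ^^ i) (a + \<epsilon>) = u + \<beta> ^ i * \<epsilon>" using Suc unfolding u_def by simp
      have tu: "(Tb \<beta> ^^ Suc i) a = \<beta> * u - of_int \<lfloor>\<beta> * u\<rfloor>" unfolding u_def by (simp add: Tb_def)
      have "\<epsilon> < h i" by (rule hi[OF ij])
      then have "\<beta> ^ Suc i * \<epsilon> < 1 - (Tb \<beta> ^^ Suc i) a" unfolding h_def using b by (simp add: field_simps)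
      then have v1: "v < 1" unfolding v_def by simp
      have v0: "0 \<le> v" unfolding v_def using ge[of "Suc i"] a01 e0 b by simp
      have bv: "\<beta> * (u + \<beta> ^ i * \<epsilon>) = of_int \<lfloor>\<beta> * u\<rfloor> + v" unfolding v_def using tu by (simp add: algebra_simps)
      have fv: "\<lfloor>v\<rfloor> = 0" by (rule floor_unique) (use v0 v1 in auto)
      have "\<lfloor>of_int \<lfloor>\<beta> * u\<rfloor> + v\<rfloor> = \<lfloor>v\<rfloor> + \<lfloor>\<beta> * u\<rfloor>"
        using floor_add_int[of v "\<lfloor>\<beta> * u\<rfloor>"] by (simp add: add.commute)
      then have "\<lfloor>of_int \<lfloor>\<beta> * u\<rfloor> + v\<rfloor> = \<lfloor>\<beta> * u\<rfloor>" using fv by linarith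
      then have fl: "\<lfloor>\<beta> * (u + \<beta> ^ i * \<epsilon>)\<rfloor> = \<lfloor>\<beta> * u\<rfloor>" unfolding bv .
      have "(Tb \<beta> ^^ Suc i) (a + \<epsilon>) = Tb \<beta> (u + \<beta> ^ i * \<epsilon>)" using ih by simp
      also have "\<dots> = v" unfolding Tb_def fl unfolding bv by simp
      finally show ?case unfolding v_def .
    qed
  qed
  have zero: "(Tb \<beta> ^^ Suc j0) (a + \<epsilon>) = 0"
  proof -
    define u where "u = (Tb \<beta> ^^ j0) a"
    have ih: "(Tb \<beta> ^^ j0) (a + \<epsilon>) = u + \<beta> ^ j0 * \<epsilon>" using lin[of j0] unfolding u_def by simp
    have tu: "(Tb \<beta> ^^ Suc j0) a = \<beta> * u - of_int \<lfloor>\<beta> * u\<rfloor>" unfolding u_def by (simp add: Tb_def)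
    have "\<beta> ^ Suc j0 * \<epsilon> = 1 - (Tb \<beta> ^^ Suc j0) a" using j0(2) unfolding h_def using b by (simp add: field_simps)
    then have bv: "\<beta> * (u + \<beta> ^ j0 * \<epsilon>) = of_int (\<lfloor>\<beta> * u\<rfloor> + 1)" using tu by (simp add: algebra_simps)
    have "(Tb \<beta> ^^ Suc j0) (a + \<epsilon>) = Tb \<beta> (u + \<beta> ^ j0 * \<epsilon>)" using ih by simp
    also have "\<dots> = 0" unfolding Tb_def bv by (simp only: floor_of_int diff_self)
    finally show ?thesis .
  qed
  have "selfmin \<beta> (a + \<epsilon>)" unfolding selfmin_def
  proof (intro conjI allI)
    show "0 < a + \<epsilon>" using a01 e0 by simp
    show "a + \<epsilon> < 1" using en eta by simp
    fix k
    show "(Tb \<beta> ^^ k) (a + \<epsilon>) = 0 \<or> a + \<epsilon> \<le> (Tb \<beta> ^^ k) (a + \<epsilon>)"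
    proof (cases "k \<le> j0")
      case True
      have "\<epsilon> \<le> \<beta> ^ k * \<epsilon>" using b e0 by (simp add: one_le_power)
      then show ?thesis using lin[OF True] ge[of k] by simp
    next
      case False
      then show ?thesis using Tb_iter_zero_after[OF zero, of k] by simp
    qed
  qed
  then show ?thesis using e0 en by (intro exI[of _ "a + \<epsilon>"]) auto
qed

lemma betarat_props: assumes b: "(\<beta>::real) > 1" and sm: "selfmin \<beta> a" and J: "(Tb \<beta> ^^ J) a = 0"
  shows "\<exists>m\<ge>1. greedy \<beta> a (m - 1) \<noteq> 0 \<and> (\<forall>i\<ge>m. greedy \<beta> a i = 0) \<and> blen \<beta> a = m \<and> a \<in> beta_rat \<beta>"
proof -
  have a01: "0 < a" "a < 1" using sm unfolding selfmin_def by auto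
  have exJ: "\<exists>J. (Tb \<beta> ^^ J) a = 0" using J by blast
  define m where "m = (LEAST J. (Tb \<beta> ^^ J) a = 0)"
  have mz: "(Tb \<beta> ^^ m) a = 0" unfolding m_def by (rule LeastI_ex[OF exJ])
  have mb: "\<And>i. i < m \<Longrightarrow> (Tb \<beta> ^^ i) a \<noteq> 0" unfolding m_def using not_less_Least by blast
  have m1: "m \<ge> 1" using mz a01 by (cases m) auto
  define z where "z = (Tb \<beta> ^^ (m - 1)) a"
  have z0: "z > 0" using mb[of "m - 1"] m1 Tb_iter_nonneg[where x=a and \<beta>=\<beta> and k="m - 1"] a01 unfolding z_def by auto
  have "(Tb \<beta> ^^ m) a = Tb \<beta> z" unfolding z_def using m1 by (cases m) auto
  then have "Tb \<beta> z = 0" using mz by simp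
  then have fz: "of_int \<lfloor>\<beta> * z\<rfloor> = \<beta> * z" unfolding Tb_def by simp
  have "\<beta> * z > 0" using z0 b by simp
  then have "(0::real) < of_int \<lfloor>\<beta> * z\<rfloor>" using fz by linarith
  then have "\<lfloor>\<beta> * z\<rfloor> > 0" by simp
  then have g1: "greedy \<beta> a (m - 1) \<noteq> 0" unfolding greedy_def z_def by simp
  have g2: "\<forall>i\<ge>m. greedy \<beta> a i = 0"
  proof (intro allI impI)
    fix i assume "m \<le> i"
    then have "(Tb \<beta> ^^ i) a = 0" using Tb_iter_zero_after[OF mz] by blast
    then show "greedy \<beta> a i = 0" unfolding greedy_def by simp
  qed
  have bl: "blen \<beta> a = m" unfolding blen_def
  proof (rule Least_equality)
    show "\<forall>i\<ge>m. greedy \<beta> a i = 0" by (rule g2)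
    fix y assume "\<forall>i\<ge>y. greedy \<beta> a i = 0"
    then show "m \<le> y"
    proof (rule contrapos_pp)
      assume "\<not> m \<le> y"
      then have "y \<le> m - 1" by simp
      then show "\<not> (\<forall>i\<ge>y. greedy \<beta> a i = 0)" using g1 by auto
    qed
  qed
  have "\<exists>m\<ge>1. greedy \<beta> a (m - 1) \<noteq> 0 \<and> (\<forall>i\<ge>m. greedy \<beta> a i = 0)"
    using m1 g1 g2 by (intro exI[of _ m]) simp
  then have "a \<in> beta_rat \<beta>" unfolding beta_rat_def using a01 by simp
  then show ?thesis using m1 g1 g2 bl by (intro exI[of _ m]) simp
qed

theorem mainTheorem4:
  fixes \<beta> t :: real
  assumes "\<beta> > 1" and "t \<in> {0..<1}" and "t \<notin> Ubif \<beta>"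
  shows "\<exists>r \<in> beta_rat \<beta>. t \<in> {r<..<rstar \<beta> r} \<and> r \<in> Ubif \<beta> \<and>
           (rstar \<beta> r \<in> Ubif \<beta> \<or> rstar \<beta> r = 1)"
proof -
  have b: "\<beta> > 1" by fact
  have nb: "\<not> bifurcation \<beta> t" using assms(2,3) unfolding Ubif_def by auto
  then have t01: "0 < t" "t < 1" using assms(2) unfolding bifurcation_def by auto
  then obtain \<delta> where d: "\<delta> > 0" "\<forall>t'\<in>{0..1}. \<bar>t' - t\<bar> < \<delta> \<longrightarrow> Kset \<beta> t' = Kset \<beta> t"
    using nb unfolding bifurcation_def by auto
  have far: "\<And>y. selfmin \<beta> y \<Longrightarrow> \<delta> \<le> \<bar>y - t\<bar>"
  proof (rule ccontr)
    fix y assume "selfmin \<beta> y" "\<not> \<delta> \<le> \<bar>y - t\<bar>"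
    then have "\<exists>t'\<in>{0..1}. \<bar>t' - t\<bar> < \<delta> \<and> Kset \<beta> t' \<noteq> Kset \<beta> t"
      using selfmin_near[of \<beta> y t \<delta>] t01 d(1) by simp
    then show False using d(2) by blast
  qed
  define A where "A = {y. selfmin \<beta> y \<and> y < t}"
  obtain n0 where n0: "1 / t < \<beta> ^ n0" using real_arch_pow[OF b] by blast
  have "\<beta> ^ n0 \<le> \<beta> ^ Suc n0" using b by (intro power_increasing) auto
  then have "1 / t < \<beta> ^ Suc n0" using n0 by simp
  then have y0t: "1 / \<beta> ^ Suc n0 < t" using t01 b by (simp add: field_simps)
  have y0A: "1 / \<beta> ^ Suc n0 \<in> A" unfolding A_def using selfmin_inv_pow[OF b] y0t by simp
  have Ane: "A \<noteq> {}" using y0A by auto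
  have Abd: "bdd_above A" unfolding A_def bdd_above_def by (intro exI[of _ t]) auto
  define a where "a = Sup A"
  have Ale: "\<And>y. y \<in> A \<Longrightarrow> y \<le> a" unfolding a_def using Abd by (simp add: cSup_upper)
  have Atd: "\<And>y. y \<in> A \<Longrightarrow> y \<le> t - \<delta>"
  proof -
    fix y assume "y \<in> A"
    then have "selfmin \<beta> y" "y < t" unfolding A_def by auto
    then show "y \<le> t - \<delta>" using far[of y] by linarith
  qed
  have atd: "a \<le> t - \<delta>" unfolding a_def using Ane Atd by (intro cSup_least) auto
  have a0: "0 < a" using Ale[OF y0A] b by (smt (verit) divide_pos_pos zero_less_power)
  have a1: "a < 1" using atd t01 d(1) by linarith
  have sma: "selfmin \<beta> a"
  proof (cases "a \<in> A")
    case True then show ?thesis unfolding A_def by simp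
  next
    case False
    show ?thesis
    proof (rule left_limit_selfmin[OF b a0 a1], intro allI impI)
      fix \<eta> :: real assume "\<eta> > 0"
      then have "a - \<eta> < Sup A" unfolding a_def by simp
      then obtain y where "y \<in> A" "a - \<eta> < y" using less_cSup_iff[OF Ane Abd] by blast
      moreover have "y < a" using Ale[OF \<open>y \<in> A\<close>] False \<open>y \<in> A\<close> by (cases "y = a") auto
      ultimately show "\<exists>y. selfmin \<beta> y \<and> a - \<eta> < y \<and> y < a" unfolding A_def by blast
    qed
  qed
  have "\<exists>J. (Tb \<beta> ^^ J) a = 0"
  proof (rule ccontr)
    assume "\<not> ?thesis"
    then have nz: "\<forall>j. (Tb \<beta> ^^ j) a \<noteq> 0" by blast
    define \<eta> where "\<eta> = min (t - a) (1 - a)"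
    have "\<eta> > 0" "a + \<eta> \<le> 1" unfolding \<eta>_def using atd d(1) a1 by auto
    then obtain y where y: "selfmin \<beta> y" "a < y" "y < a + \<eta>" using right_ext[OF b sma nz] by blast
    then have "y < t" unfolding \<eta>_def by simp
    then have "y \<in> A" using y unfolding A_def by simp
    then show False using Ale y by force
  qed
  then obtain J where J: "(Tb \<beta> ^^ J) a = 0" by blast
  obtain m where m: "m \<ge> 1" "greedy \<beta> a (m - 1) \<noteq> 0" "\<forall>i\<ge>m. greedy \<beta> a i = 0" "blen \<beta> a = m" "a \<in> beta_rat \<beta>"
    using betarat_props[OF b sma J] by blast
  have rs: "rstar \<beta> a = 1 \<or> (selfmin \<beta> (rstar \<beta> a) \<and> a < rstar \<beta> a)"
    by (rule rstar_good[OF b sma m(1-4)])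
  have at: "a < t" using atd d(1) by simp
  have "t < rstar \<beta> a \<and> (rstar \<beta> a \<in> Ubif \<beta> \<or> rstar \<beta> a = 1)"
    using rs
  proof
    assume "rstar \<beta> a = 1" then show ?thesis using t01 by simp
  next
    assume h: "selfmin \<beta> (rstar \<beta> a) \<and> a < rstar \<beta> a"
    have "\<not> rstar \<beta> a < t"
    proof
      assume "rstar \<beta> a < t"
      then have "rstar \<beta> a \<in> A" unfolding A_def using h by simp
      then show False using Ale h by force
    qed
    moreover have "rstar \<beta> a \<noteq> t" using far[of "rstar \<beta> a"] h d(1) by auto
    ultimately show ?thesis using selfmin_Ubif h by auto
  qed
  then show ?thesis using m(5) at selfmin_Ubif[OF sma] by auto
qed

end
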